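(* Let $\{(S_n,J_n)\}$ be a discrete-time Markov additive process as in the context, satisfying the assumptions listed there. Let $\overline{\boldsymbol{\beta}}(x)=\int_x^\infty d\boldsymbol{\beta}(y)$ and $\overline{\boldsymbol{H}}(x)=\int_x^\infty d\boldsymbol{H}(y)$ for $x\in\mathbb{R}$, and suppose there exist $\tilde c\in[0,\infty)$, a nonnegative random variable $Y\in\mathcal{S}$, a finite nonnegative row vector $\widetilde{\boldsymbol{\beta}}$ and a finite nonnegative matrix $\widetilde{\boldsymbol{H}}$ such that, entrywise, $$\limsup_{x\to\infty}\frac{\overline{\boldsymbol{\beta}}(x)}{\mathbb{P}(Y>x)}\le\tilde c\,\widetilde{\boldsymbol{\beta}},\qquad \limsup_{x\to\infty}\frac{\overline{\boldsymbol{H}}(x)}{\mathbb{P}(Y>x)}\le\tilde c\,\widetilde{\boldsymbol{H}}.$$ Then there is a finite constant $C>0$ such that $\limsup_{x\to\infty}\mathbb{P}(\Delta B_n>x)/\mathbb{P}(Y>x)\le\tilde c\,C$ for $n=0,1$.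
   Context: Let $\mathbb{D}=\{0,\dots,d-1\}$. $\{J_n\}$ is a Markov chain on $\mathbb{D}$ and $X_0,X_1,\dots$ are real r.v.s with $\mathbb{P}(X_0\le x,J_0=i)=\beta_i(x)$ and, conditionally on the past up to time $n$ and on $J_n=i$, $\mathbb{P}(X_{n+1}\le x,J_{n+1}=j\mid\cdot)=H_{i,j}(x)$, with $\sum_i\beta_i(\infty)=1$, $\sum_jH_{i,j}(\infty)=1$. $S_n=\sum_{\nu=0}^nX_\nu$; $\boldsymbol{\beta}(x)=(\beta_i(x))$, $\boldsymbol{H}(x)=(H_{i,j}(x))$. Assumptions: $\boldsymbol{H}(\infty)$ irreducible stochastic; $\boldsymbol{\varpi}\int x\,d\boldsymbol{H}(x)\mathbf{e}\in(0,\infty)$ with $\boldsymbol{\varpi}$ the stationary vector of $\boldsymbol{H}(\infty)$. Let $0\le\tau_0<\tau_1<\cdots$ be the successive hitting times of state $0$ by $\{J_n\}$, and set $B(t)=S_{\lfloor t\rfloor}$, $\Delta B_0=B(\tau_0)=S_{\tau_0}$, $\Delta B_1=S_{\tau_1}-S_{\tau_0}$. Class $\mathcal{S}$: nonnegative $X$ with $\mathbb{P}(X>x)>0$ for all $x\ge0$ and $\mathbb{P}(X_1+X_2>x)\sim2\mathbb{P}(X>x)$ for independent copies $X_1,X_2$ of $X$. *)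

theory Defs
  imports "HOL-Probability.Probability" "HOL-Library.Landau_Symbols"
begin

text \<open>Square matrices indexed by the state space D = {0..<d}, as functions.\<close>

fun mat_pow :: "nat \<Rightarrow> (nat \<Rightarrow> nat \<Rightarrow> real) \<Rightarrow> nat \<Rightarrow> nat \<Rightarrow> nat \<Rightarrow> real" where
  "mat_pow d P 0 i j = (if i = j then 1 else 0)"
| "mat_pow d P (Suc n) i j = (\<Sum>k<d. mat_pow d P n i k * P k j)"

definition stochastic_mat :: "nat \<Rightarrow> (nat \<Rightarrow> nat \<Rightarrow> real) \<Rightarrow> bool" where
  "stochastic_mat d P \<longleftrightarrow> (\<forall>i<d. \<forall>j<d. 0 \<le> P i j) \<and> (\<forall>i<d. (\<Sum>j<d. P i j) = 1)"

definition irreducible_mat :: "nat \<Rightarrow> (nat \<Rightarrow> nat \<Rightarrow> real) \<Rightarrow> bool" where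
  "irreducible_mat d P \<longleftrightarrow> (\<forall>i<d. \<forall>j<d. \<exists>n. 0 < mat_pow d P n i j)"

definition stationary_vec :: "nat \<Rightarrow> (nat \<Rightarrow> nat \<Rightarrow> real) \<Rightarrow> (nat \<Rightarrow> real) \<Rightarrow> bool" where
  "stationary_vec d P w \<longleftrightarrow> (\<forall>i<d. 0 \<le> w i) \<and> (\<Sum>i<d. w i) = 1
      \<and> (\<forall>j<d. (\<Sum>i<d. w i * P i j) = w j)"

text \<open>Class S (subexponential), stated for the law F of a random variable Y.\<close>
definition subexponential :: "real measure \<Rightarrow> bool" where
  "subexponential F \<longleftrightarrow> prob_space F \<and> sets F = sets borel
     \<and> measure F {..<0} = 0
     \<and> (\<forall>x\<ge>0. 0 < measure F {x<..})
     \<and> (\<lambda>x. measure (F \<star> F) {x<..}) \<sim>[at_top] (\<lambda>x. 2 * measure F {x<..})"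

text \<open>Markov additive process on D = {0..<d}: finite-dimensional distributions of
  (X_n, J_n) given by the initial kernel beta and the transition kernel H.\<close>
definition MAP :: "'a measure \<Rightarrow> nat \<Rightarrow> (nat \<Rightarrow> real measure) \<Rightarrow> (nat \<Rightarrow> nat \<Rightarrow> real measure)
     \<Rightarrow> (nat \<Rightarrow> 'a \<Rightarrow> real) \<Rightarrow> (nat \<Rightarrow> 'a \<Rightarrow> nat) \<Rightarrow> bool" where
  "MAP M d \<beta> H X J \<longleftrightarrow> prob_space M
     \<and> (\<forall>i<d. sets (\<beta> i) = sets borel \<and> finite_measure (\<beta> i))
     \<and> (\<forall>i<d. \<forall>j<d. sets (H i j) = sets borel \<and> finite_measure (H i j))
     \<and> (\<Sum>i<d. measure (\<beta> i) UNIV) = 1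
     \<and> (\<forall>i<d. (\<Sum>j<d. measure (H i j) UNIV) = 1)
     \<and> (\<forall>n. X n \<in> borel_measurable M \<and> J n \<in> measurable M (count_space UNIV))
     \<and> (\<forall>n. \<forall>\<omega>\<in>space M. J n \<omega> < d)
     \<and> (\<forall>n (is :: nat \<Rightarrow> nat) (A :: nat \<Rightarrow> real set).
          (\<forall>k\<le>n. is k < d \<and> A k \<in> sets borel) \<longrightarrow>
          measure M {\<omega>\<in>space M. \<forall>k\<le>n. J k \<omega> = is k \<and> X k \<omega> \<in> A k}
            = measure (\<beta> (is 0)) (A 0) * (\<Prod>k\<in>{1..n}. measure (H (is (k - 1)) (is k)) (A k)))"

definition partial_sum :: "(nat \<Rightarrow> 'a \<Rightarrow> real) \<Rightarrow> nat \<Rightarrow> 'a \<Rightarrow> real" where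
  "partial_sum X n \<omega> = (\<Sum>\<nu>\<le>n. X \<nu> \<omega>)"

definition tau0 :: "(nat \<Rightarrow> 'a \<Rightarrow> nat) \<Rightarrow> 'a \<Rightarrow> nat" where
  "tau0 J \<omega> = (LEAST n. J n \<omega> = 0)"

definition tau1 :: "(nat \<Rightarrow> 'a \<Rightarrow> nat) \<Rightarrow> 'a \<Rightarrow> nat" where
  "tau1 J \<omega> = (LEAST n. tau0 J \<omega> < n \<and> J n \<omega> = 0)"

definition DeltaB :: "(nat \<Rightarrow> 'a \<Rightarrow> real) \<Rightarrow> (nat \<Rightarrow> 'a \<Rightarrow> nat) \<Rightarrow> nat \<Rightarrow> 'a \<Rightarrow> real" where
  "DeltaB X J m \<omega> = (if m = 0 then partial_sum X (tau0 J \<omega>) \<omega>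
                      else partial_sum X (tau1 J \<omega>) \<omega> - partial_sum X (tau0 J \<omega>) \<omega>)"

end

theory Submission
  imports Defs
begin

definition Fb :: "real measure \<Rightarrow> real \<Rightarrow> real" where
  "Fb F x = measure F {x<..}"

definition chi :: "real \<Rightarrow> real" where
  "chi x = (if x < 0 then 1 else 0)"

definition Iop :: "real measure \<Rightarrow> real \<Rightarrow> (real \<Rightarrow> real) \<Rightarrow> real \<Rightarrow> real" where
  "Iop F B g x = (1 - B) * g x + B * (\<integral>y. g (x - y) \<partial>F)"

definition Phi :: "real measure \<Rightarrow> real \<Rightarrow> nat \<Rightarrow> real \<Rightarrow> real" where
  "Phi F B n = (Iop F B ^^ n) chi"

definition good0 :: "(real \<Rightarrow> real) \<Rightarrow> bool" where
  "good0 g \<longleftrightarrow> antimono g \<and> (\<forall>x. 0 \<le> g x \<and> g x \<le> 1)"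

definition good :: "(real \<Rightarrow> real) \<Rightarrow> bool" where
  "good g \<longleftrightarrow> good0 g \<and> (\<forall>x<0. g x = 1)"

lemma good_good0: "good g \<Longrightarrow> good0 g" by (simp add: good_def)

lemma good0_meas: "good0 g \<Longrightarrow> g \<in> borel_measurable borel"
proof -
  assume "good0 g"
  then have "mono (\<lambda>x. - g x)" unfolding good0_def antimono_def mono_def by auto
  then have "(\<lambda>x. - (- g x)) \<in> borel_measurable borel"
    by (intro borel_measurable_uminus borel_measurable_mono)
  then show ?thesis by simp
qed

context real_distribution
begin

lemma space_M'[simp]: "space M = UNIV" by (simp add: space_eq_univ)
lemma prob_UNIV'[simp]: "prob UNIV = 1" using prob_space by simp

lemma good0_int: "good0 g \<Longrightarrow> integrable M (\<lambda>y. g (x - y))"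
proof -
  assume g: "good0 g"
  note [measurable] = good0_meas[OF g]
  show ?thesis
    using g unfolding good0_def
    by (intro integrable_const_bound[where B=1]) auto
qed

lemma good0_int_bounds: assumes "good0 g" shows "0 \<le> (\<integral>y. g (x - y) \<partial>M)" "(\<integral>y. g (x - y) \<partial>M) \<le> 1"
proof -
  show "0 \<le> (\<integral>y. g (x - y) \<partial>M)" by (intro Bochner_Integration.integral_nonneg) (use assms in \<open>auto simp: good0_def\<close>)
  have "(\<integral>y. g (x - y) \<partial>M) \<le> (\<integral>y. 1 \<partial>M)"
    using assms by (intro integral_mono[OF good0_int[OF assms]]) (auto simp: good0_def)
  then show "(\<integral>y. g (x - y) \<partial>M) \<le> 1" by simp
qed

lemma good0_int_mono: assumes "good0 g" "good0 h" "\<And>x. g x \<le> h x"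
  shows "(\<integral>y. g (x - y) \<partial>M) \<le> (\<integral>y. h (x - y) \<partial>M)"
  using assms by (intro integral_mono good0_int) auto

lemma good0_int_antimono: assumes "good0 g" shows "good0 (\<lambda>x. \<integral>y. g (x - y) \<partial>M)"
  unfolding good0_def
proof (intro conjI allI)
  show "antimono (\<lambda>x. \<integral>y. g (x - y) \<partial>M)"
    unfolding antimono_def
  proof safe
    fix x x' :: real assume "x \<le> x'"
    show "(\<integral>y. g (x' - y) \<partial>M) \<le> (\<integral>y. g (x - y) \<partial>M)"
      using assms \<open>x \<le> x'\<close> by (intro integral_mono good0_int) (auto simp: good0_def antimono_def)
  qed
qed (use good0_int_bounds[OF assms] in auto)

end

locale nnd = real_distribution F for F +
  assumes nonneg: "measure F {..<0} = 0"
begin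

lemma sets_F[simp, measurable_cong]: "sets F = sets borel" by simp
lemma space_F[simp]: "space F = UNIV" by (simp add: space_eq_univ)
lemma prob_UNIV[simp]: "prob UNIV = 1" using prob_space by simp

lemma AE_nonneg: "AE y in F. 0 \<le> y"
proof -
  have "emeasure F {..<0} = 0" using nonneg emeasure_eq_measure by simp
  then show ?thesis
    by (intro AE_I[of _ _ "{..<0}"]) auto
qed

lemma Fb_le1: "Fb F x \<le> 1" unfolding Fb_def by simp
lemma Fb_nonneg: "0 \<le> Fb F x" unfolding Fb_def by simp
lemma Fb_antimono: "x \<le> y \<Longrightarrow> Fb F y \<le> Fb F x"
  unfolding Fb_def by (intro finite_measure_mono) auto
lemma Fb_eq: "Fb F x = 1 - cdf F x"
proof -
  have "measure F {x<..} = measure F (space F - {..x})"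
    by (intro arg_cong[where f="measure F"]) auto
  also have "\<dots> = 1 - measure F {..x}"
    by (subst prob_compl) auto
  finally show ?thesis unfolding Fb_def cdf_def2 .
qed
lemma Fb_neg: "x < 0 \<Longrightarrow> Fb F x = 1"
proof -
  assume "x < 0"
  have "cdf F x \<le> measure F {..<0}" unfolding cdf_def2
    using \<open>x<0\<close> by (intro finite_measure_mono) auto
  then show ?thesis using nonneg cdf_nonneg[of x] Fb_eq by simp
qed
lemma Fb_lim: "(Fb F \<longlongrightarrow> 0) at_top"
proof -
  have "((\<lambda>x. 1 - cdf F x) \<longlongrightarrow> 1 - 1) at_top"
    by (intro tendsto_diff tendsto_const cdf_lim_at_top_prob)
  then show ?thesis unfolding Fb_eq[abs_def] by simp
qed

lemma good_meas: "good g \<Longrightarrow> g \<in> borel_measurable borel"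
  by (simp add: good0_meas good_def)

lemma good_int: "good g \<Longrightarrow> integrable F (\<lambda>y. g (x - y))"
  by (simp add: good0_int good_def)

lemma good_int_bounds: assumes "good g" shows "0 \<le> (\<integral>y. g (x - y) \<partial>F)" "(\<integral>y. g (x - y) \<partial>F) \<le> 1"
  using good0_int_bounds assms good_def by auto

lemma good_int_mono: assumes "good g" "good h" "\<And>x. g x \<le> h x"
  shows "(\<integral>y. g (x - y) \<partial>F) \<le> (\<integral>y. h (x - y) \<partial>F)"
  using assms by (intro good0_int_mono) (auto simp: good_def)

lemma good_int_neg: assumes "good g" "x < 0" shows "(\<integral>y. g (x - y) \<partial>F) = 1"
proof -
  have "(\<integral>y. g (x - y) \<partial>F) = (\<integral>y. 1 \<partial>F)"
    using AE_nonneg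
    by (intro integral_cong_AE) (use assms good_meas in \<open>auto simp: good_def good0_def\<close>)
  then show ?thesis by simp
qed

lemma good_chi: "good chi"
  unfolding good_def good0_def chi_def antimono_def by auto

lemma good0_Iop: assumes g: "good0 g" and B: "0 \<le> B" "B \<le> 1" shows "good0 (Iop F B g)"
proof -
  have am: "good0 (\<lambda>x. \<integral>y. g (x - y) \<partial>F)" by (rule good0_int_antimono[OF g])
  show ?thesis unfolding good0_def
  proof (intro conjI allI)
    show "antimono (Iop F B g)" unfolding antimono_def Iop_def
      using am g B unfolding antimono_def good0_def
      by (auto intro!: add_mono mult_left_mono)
  next
    fix x
    have "0 \<le> g x" "g x \<le> 1" using g by (auto simp: good0_def)
    note i = good0_int_bounds[OF g, of x]
    show "0 \<le> Iop F B g x" unfolding Iop_def using B i \<open>0 \<le> g x\<close> by simp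
    have "(1 - B) * g x + B * (\<integral>y. g (x - y) \<partial>F) \<le> (1 - B) * 1 + B * 1"
      using B i \<open>g x \<le> 1\<close> by (intro add_mono mult_left_mono) auto
    then show "Iop F B g x \<le> 1" unfolding Iop_def by simp
  qed
qed

lemma good_Iop: assumes g: "good g" and B: "0 \<le> B" "B \<le> 1" shows "good (Iop F B g)"
  unfolding good_def
proof (intro conjI allI impI)
  show "good0 (Iop F B g)" using good0_Iop g B by (simp add: good_def)
  fix x :: real assume "x < 0"
  then show "Iop F B g x = 1" unfolding Iop_def using g good_int_neg[OF g \<open>x<0\<close>]
    by (simp add: good_def good0_def algebra_simps)
qed

lemma good_Phi: "0 \<le> B \<Longrightarrow> B \<le> 1 \<Longrightarrow> good (Phi F B n)"
  by (induction n) (auto simp: Phi_def good_chi good_Iop)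

lemma Phi_Suc: "Phi F B (Suc n) = Iop F B (Phi F B n)"
  by (simp add: Phi_def)

lemma Iop_mono: assumes "good0 g" "good0 h" "\<And>x. g x \<le> h x" "0 \<le> B" "B \<le> 1"
  shows "Iop F B g x \<le> Iop F B h x"
  unfolding Iop_def using assms good0_int_mono[OF assms(1-3)]
  by (intro add_mono mult_left_mono) auto

end

context nnd
begin

lemma good_Fb: "good (Fb F)"
  unfolding good_def good0_def antimono_def using Fb_antimono Fb_nonneg Fb_le1 Fb_neg by auto

lemma conv_tail: "measure (F \<star> F) {x<..} = (\<integral>y. Fb F (x - y) \<partial>F)"
proof -
  have fm: "finite_measure F" by (simp add: finite_measure_axioms)
  have "emeasure (F \<star> F) {x<..} = (\<integral>\<^sup>+y. emeasure F {a. a + y \<in> {x<..}} \<partial>F)"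
    by (rule convolution_emeasure) (auto simp: fm)
  also have "\<dots> = (\<integral>\<^sup>+y. ennreal (Fb F (x - y)) \<partial>F)"
  proof (intro nn_integral_cong)
    fix y
    have "{a. a + y \<in> {x<..}} = {x - y<..}" by auto
    then show "emeasure F {a. a + y \<in> {x<..}} = ennreal (Fb F (x - y))"
      by (simp add: Fb_def emeasure_eq_measure)
  qed
  also have "\<dots> = ennreal (\<integral>y. Fb F (x - y) \<partial>F)"
    by (intro nn_integral_eq_integral good_int good_Fb) (auto simp: Fb_nonneg)
  finally have "emeasure (F \<star> F) {x<..} = ennreal (\<integral>y. Fb F (x - y) \<partial>F)" .
  moreover have "finite_measure (F \<star> F)"
    by (intro convolution_finite fm) auto
  ultimately show ?thesis
    using good_int_bounds(1)[OF good_Fb]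
    by (simp add: finite_measure.emeasure_eq_measure)
qed

lemma int_chi: "(\<integral>y. chi (x - y) \<partial>F) = Fb F x"
proof -
  have "(\<integral>y. chi (x - y) \<partial>F) = (\<integral>y. indicator {x<..} y \<partial>F)"
    by (intro Bochner_Integration.integral_cong) (auto simp: chi_def indicator_def)
  then show ?thesis by (simp add: Fb_def)
qed

end

locale subexp = nnd +
  assumes pos: "\<And>x. 0 \<le> x \<Longrightarrow> 0 < measure F {x<..}"
    and equiv: "(\<lambda>x. measure (F \<star> F) {x<..}) \<sim>[at_top] (\<lambda>x. 2 * measure F {x<..})"
begin

lemma Fb_pos: "0 < Fb F x"
  using pos[of x] Fb_neg[of x] by (cases "x < 0") (auto simp: Fb_def)

lemma K0: assumes "0 < e" shows "eventually (\<lambda>x. (\<integral>y. Fb F (x - y) \<partial>F) \<le> (2 + e) * Fb F x) at_top"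
proof -
  have "eventually (\<lambda>x. norm (measure (F \<star> F) {x<..}) \<le> (1 + e/2) * norm (2 * measure F {x<..})) at_top"
    by (rule asymp_equiv_imp_eventually_le[OF equiv]) (use assms in auto)
  then show ?thesis
  proof (rule eventually_mono)
    fix x assume "norm (measure (F \<star> F) {x<..}) \<le> (1 + e / 2) * norm (2 * measure F {x<..})"
    then show "(\<integral>y. Fb F (x - y) \<partial>F) \<le> (2 + e) * Fb F x"
      using Fb_nonneg[of x] by (simp add: conv_tail[symmetric] Fb_def[symmetric] algebra_simps)
  qed
qed

lemma K0': assumes "0 < e" obtains x1 where "0 \<le> x1" "\<And>x. x1 \<le> x \<Longrightarrow> (\<integral>y. Fb F (x - y) \<partial>F) \<le> (2 + e) * Fb F x"
proof -
  from K0[OF assms] obtain x1 where "\<And>x. x1 \<le> x \<Longrightarrow> (\<integral>y. Fb F (x - y) \<partial>F) \<le> (2 + e) * Fb F x"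
    unfolding eventually_at_top_linorder by blast
  then show ?thesis by (intro that[of "max 0 x1"]) auto
qed

lemma int_good_bound:
  assumes g: "good g" and a: "0 \<le> a" and gb: "\<And>t. 0 \<le> t \<Longrightarrow> g t \<le> a * Fb F t"
  shows "(\<integral>y. g (x - y) \<partial>F) \<le> a * ((\<integral>y. Fb F (x - y) \<partial>F) - Fb F x) + Fb F x"
proof -
  have pw: "g t \<le> a * (Fb F t - chi t) + chi t" for t
    using gb[of t] g Fb_neg[of t] by (cases "t < 0") (auto simp: chi_def good_def good0_def)
  have ic: "integrable F (\<lambda>y. chi (x - y))" by (intro good_int good_chi)
  have iF: "integrable F (\<lambda>y. Fb F (x - y))" by (intro good_int good_Fb)
  have "(\<integral>y. g (x - y) \<partial>F) \<le> (\<integral>y. a * (Fb F (x - y) - chi (x - y)) + chi (x - y) \<partial>F)"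
    by (intro integral_mono[OF good_int[OF g]] pw) (use ic iF in auto)
  also have "\<dots> = a * ((\<integral>y. Fb F (x - y) \<partial>F) - (\<integral>y. chi (x - y) \<partial>F)) + (\<integral>y. chi (x - y) \<partial>F)"
    using ic iF by simp
  finally show ?thesis by (simp add: int_chi)
qed

lemma Phi_nB: assumes "0 \<le> B" "B \<le> 1" "0 \<le> x" shows "Phi F B n x \<le> n * B"
  using assms(3)
proof (induction n arbitrary: x)
  case 0 then show ?case by (simp add: Phi_def chi_def)
next
  case (Suc n)
  have "Phi F B (Suc n) x = (1 - B) * Phi F B n x + B * (\<integral>y. Phi F B n (x - y) \<partial>F)"
    by (simp add: Phi_Suc Iop_def)
  also have "\<dots> \<le> (1 - B) * (n * B) + B * 1"
    using assms Suc good_int_bounds(2)[OF good_Phi[OF assms(1,2)]]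
    by (intro add_mono mult_left_mono) auto
  also have "\<dots> \<le> Suc n * B" using assms by (simp add: algebra_simps)
  finally show ?case .
qed

lemma Kesten:
  assumes B: "0 \<le> B" "B \<le> 1" and e: "0 < e"
    and x1: "0 \<le> x1" "\<And>x. x1 \<le> x \<Longrightarrow> (\<integral>y. Fb F (x - y) \<partial>F) \<le> (2 + e) * Fb F x"
  shows "0 \<le> x \<Longrightarrow> Phi F B n x \<le> (1 / Fb F x1) * B * n * (1 + e) ^ n * Fb F x"
proof (induction n arbitrary: x)
  case 0 then show ?case by (simp add: Phi_def chi_def)
next
  case (Suc n)
  define K where "K = 1 / Fb F x1"
  have K1: "1 \<le> K" unfolding K_def using Fb_pos[of x1] Fb_le1[of x1] by simp
  have Kp: "0 < K" using K1 by simp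
  define b where "b = K * B * n * (1 + e) ^ n"
  have b0: "0 \<le> b" unfolding b_def using Kp B e by simp
  have IH: "\<And>t. 0 \<le> t \<Longrightarrow> Phi F B n t \<le> b * Fb F t" using Suc.IH unfolding b_def K_def by simp
  show ?case
  proof (cases "x < x1")
    case True
    have "Phi F B (Suc n) x \<le> Suc n * B" by (rule Phi_nB) (use B Suc in auto)
    also have "\<dots> = Suc n * B * (Fb F x1 * K)" unfolding K_def using Fb_pos[of x1] by simp
    also have "\<dots> \<le> Suc n * B * (Fb F x * K)"
      using Fb_antimono[of x x1] True B Kp by (intro mult_left_mono mult_right_mono) auto
    also have "\<dots> \<le> Suc n * B * (Fb F x * K) * (1 + e) ^ Suc n"
    proof -
      have "1 \<le> (1 + e) ^ Suc n" using e by (intro one_le_power) auto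
      moreover have "0 \<le> Suc n * B * (Fb F x * K)" using B Kp Fb_nonneg[of x] by simp
      ultimately show ?thesis by (simp add: mult_le_cancel_left1)
    qed
    finally have "Phi F B (Suc n) x \<le> K * B * Suc n * (1 + e) ^ Suc n * Fb F x"
      by (simp add: mult_ac)
    then show ?thesis unfolding K_def .
  next
    case False
    have ib: "(\<integral>y. Phi F B n (x - y) \<partial>F) \<le> b * ((\<integral>y. Fb F (x - y) \<partial>F) - Fb F x) + Fb F x"
      by (rule int_good_bound[OF good_Phi[OF B] b0 IH])
    also have "\<dots> \<le> b * ((2 + e) * Fb F x - Fb F x) + Fb F x"
      using x1(2)[of x] False b0 by (intro add_mono mult_left_mono) auto
    finally have ib': "(\<integral>y. Phi F B n (x - y) \<partial>F) \<le> (b * (1 + e) + 1) * Fb F x"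
      by (simp add: algebra_simps)
    have "Phi F B (Suc n) x = (1 - B) * Phi F B n x + B * (\<integral>y. Phi F B n (x - y) \<partial>F)"
      by (simp add: Phi_Suc Iop_def)
    also have "\<dots> \<le> (1 - B) * (b * Fb F x) + B * ((b * (1 + e) + 1) * Fb F x)"
      using B IH[of x] ib' Suc.prems by (intro add_mono mult_left_mono) auto
    also have "\<dots> = (b * (1 + B * e) + B) * Fb F x" by (simp add: algebra_simps)
    also have "\<dots> \<le> (K * B * Suc n * (1 + e) ^ Suc n) * Fb F x"
    proof (intro mult_right_mono Fb_nonneg)
      have "b * (1 + B * e) \<le> b * (1 + e)" using B e b0 by (intro mult_left_mono) (auto simp: mult_le_cancel_right1)
      also have "\<dots> = K * B * n * (1 + e) ^ Suc n" unfolding b_def by simp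
      finally have 1: "b * (1 + B * e) \<le> K * B * n * (1 + e) ^ Suc n" .
      have "B \<le> K * B * (1 + e) ^ Suc n"
      proof -
        have "1 \<le> K * (1 + e) ^ Suc n" using K1 e
          by (metis less_eq_real_def mult_mono' one_le_power order.trans mult_1_left le_add_same_cancel1 zero_le_one)
        then show ?thesis using B by (metis mult.assoc mult.commute mult_left_mono mult_cancel_right1)
      qed
      with 1 show "b * (1 + B * e) + B \<le> K * B * Suc n * (1 + e) ^ Suc n"
        by (simp add: algebra_simps)
    qed
    finally show ?thesis unfolding K_def by (simp add: algebra_simps)
  qed
qed

end

context subexp
begin

lemma Phi1_step_lower: assumes "0 \<le> s"
  shows "Fb F s + (1 - Fb F s) * Phi F 1 n s \<le> Phi F 1 (Suc n) s"
proof -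
  have g: "good (Phi F 1 n)" by (rule good_Phi) auto
  have ic: "integrable F (\<lambda>y. chi (s - y))" by (intro good_int good_chi)
  have "(\<integral>y. chi (s - y) + (1 - chi (s - y)) * Phi F 1 n s \<partial>F) \<le> (\<integral>y. Phi F 1 n (s - y) \<partial>F)"
  proof (rule integral_mono_AE)
    show "integrable F (\<lambda>y. chi (s - y) + (1 - chi (s - y)) * Phi F 1 n s)" using ic by simp
    show "integrable F (\<lambda>y. Phi F 1 n (s - y))" by (rule good_int[OF g])
    show "AE y in F. chi (s - y) + (1 - chi (s - y)) * Phi F 1 n s \<le> Phi F 1 n (s - y)"
      using AE_nonneg
    proof eventually_elim
      case (elim y)
      show ?case
      proof (cases "s - y < 0")
        case True then show ?thesis using g by (simp add: chi_def good_def good0_def)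
      next
        case False then show ?thesis using g elim unfolding good_def good0_def antimono_def by (simp add: chi_def)
      qed
    qed
  qed
  also have "\<dots> = Phi F 1 (Suc n) s" by (simp add: Phi_Suc Iop_def)
  finally show ?thesis using ic by (simp add: int_chi)
qed

lemma Phi1_lower: assumes "0 \<le> s"
  shows "n * Fb F s * (1 - Fb F s) ^ (n - 1) \<le> Phi F 1 n s"
proof (induction n)
  case 0 then show ?case by (simp add: Phi_def chi_def)
next
  case (Suc n)
  define f where "f = Fb F s"
  have f: "0 \<le> f" "f \<le> 1" unfolding f_def using Fb_nonneg Fb_le1 by auto
  have "Suc n * f * (1 - f) ^ n \<le> f + (1 - f) * (n * f * (1 - f) ^ (n - 1))"
  proof (cases n)
    case 0 then show ?thesis by simp
  next
    case (Suc m)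
    have "f * (1 - f) ^ n \<le> f" using f by (simp add: mult_left_le power_le_one)
    moreover have "(1 - f) * (n * f * (1 - f) ^ (n - 1)) = n * f * (1 - f) ^ n"
      using Suc by (simp add: algebra_simps)
    ultimately show ?thesis by (simp add: algebra_simps)
  qed
  also have "\<dots> \<le> f + (1 - f) * Phi F 1 n s"
    using Suc f by (intro add_left_mono mult_left_mono) (auto simp: f_def)
  also have "\<dots> \<le> Phi F 1 (Suc n) s" unfolding f_def by (rule Phi1_step_lower[OF assms])
  finally show ?case unfolding f_def by simp
qed

lemma Phi1_lower_half: assumes "0 \<le> s" "k * Fb F s \<le> 1/2"
  shows "k * Fb F s / 2 \<le> Phi F 1 k s"
proof -
  define f where "f = Fb F s"
  have f: "0 \<le> f" "f \<le> 1" unfolding f_def using Fb_nonneg Fb_le1 by auto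
  have "1 + real (k - 1) * (- f) \<le> (1 + (- f)) ^ (k - 1)"
    by (rule Bernoulli_inequality) (use f in auto)
  moreover have "real (k - 1) * f \<le> 1/2"
  proof -
    have "real (k - 1) * f \<le> k * f" using f by (intro mult_right_mono) auto
    then show ?thesis using assms(2) unfolding f_def by simp
  qed
  ultimately have "1/2 \<le> (1 - f) ^ (k - 1)" by simp
  then have "k * f / 2 \<le> k * f * (1 - f) ^ (k - 1)"
    using f by (simp add: mult_left_mono[of "1/2" _ "k * f", simplified])
  also have "\<dots> \<le> Phi F 1 k s" unfolding f_def by (rule Phi1_lower[OF assms(1)])
  finally show ?thesis unfolding f_def .
qed

lemma long_tail: assumes t: "0 \<le> t" and e: "0 < e"
  shows "eventually (\<lambda>x. Fb F (x - t) \<le> (1 + e) * Fb F x) at_top"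
proof -
  define d where "d = e / (2 + e)"
  have d: "0 < d" "d < 1" using e unfolding d_def by (auto simp: field_simps)
  have d1: "1 + d = (1 + e) * (1 - d)" unfolding d_def using e by (simp add: field_simps)
  have ft: "0 < Fb F t" by (rule Fb_pos)
  have ev1: "eventually (\<lambda>x. (\<integral>y. Fb F (x - y) \<partial>F) \<le> (2 + d * Fb F t) * Fb F x) at_top"
    by (rule K0) (use d ft in auto)
  have ev2: "eventually (\<lambda>x. Fb F x < d * Fb F t) at_top"
    using order_tendstoD(2)[OF Fb_lim, of "d * Fb F t"] d ft by simp
  have ev3: "eventually (\<lambda>x. t \<le> x) at_top" by (rule eventually_ge_at_top)
  show ?thesis
    using ev1 ev2 ev3
  proof eventually_elim
    case (elim x)
    note E = elim
    have i1: "integrable F (\<lambda>y. chi (x - y))" by (intro good_int good_chi)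
    have i2: "integrable F (\<lambda>y. Fb F x * indicator {..t} y)"
      by (intro integrable_mult_right integrable_real_indicator) (auto simp: emeasure_finite less_top[symmetric])
    have i3: "integrable F (\<lambda>y. Fb F (x - t) * indicator {t<..x} y)"
      by (intro integrable_mult_right integrable_real_indicator) (auto simp: emeasure_finite less_top[symmetric])
    have "(\<integral>y. chi (x - y) + Fb F x * indicator {..t} y + Fb F (x - t) * indicator {t<..x} y \<partial>F)
          \<le> (\<integral>y. Fb F (x - y) \<partial>F)"
    proof (rule integral_mono_AE)
      show "integrable F (\<lambda>y. Fb F (x - y))" by (rule good_int[OF good_Fb])
      show "integrable F (\<lambda>y. chi (x - y) + Fb F x * indicator {..t} y + Fb F (x - t) * indicator {t<..x} y)"
        using i1 i2 i3 by simp
      show "AE y in F. chi (x - y) + Fb F x * indicator {..t} y + Fb F (x - t) * indicator {t<..x} y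
                     \<le> Fb F (x - y)"
        using AE_nonneg
      proof eventually_elim
        case (elim y)
        show ?case
        proof (cases "x < y")
          case True then show ?thesis using Fb_neg[of "x - y"] E(3) by (simp add: chi_def)
        next
          case False
          show ?thesis
          proof (cases "y \<le> t")
            case True then show ?thesis using False Fb_antimono[of "x - y" x] elim
              by (simp add: chi_def)
          next
            case False2: False
            then show ?thesis using False Fb_antimono[of "x - y" "x - t"]
              by (simp add: chi_def)
          qed
        qed
      qed
    qed
    also have "\<dots> \<le> (2 + d * Fb F t) * Fb F x" by (rule E(1))
    finally have A: "(\<integral>y. chi (x - y) + Fb F x * indicator {..t} y + Fb F (x - t) * indicator {t<..x} y \<partial>F)
                  \<le> (2 + d * Fb F t) * Fb F x" .
    have m1: "measure F {..t} = 1 - Fb F t"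
    proof -
      have "measure F {..t} = measure F (space F - {t<..})" by (intro arg_cong[where f="measure F"]) auto
      also have "\<dots> = 1 - Fb F t" by (subst prob_compl) (auto simp: Fb_def)
      finally show ?thesis .
    qed
    have m2: "measure F {t<..x} = Fb F t - Fb F x"
    proof -
      have "measure F {t<..x} = measure F ({t<..} - {x<..})" by (intro arg_cong[where f="measure F"]) auto
      also have "\<dots> = Fb F t - Fb F x" unfolding Fb_def
        by (subst finite_measure_Diff) (use E(3) in auto)
      finally show ?thesis .
    qed
    have "(\<integral>y. chi (x - y) + Fb F x * indicator {..t} y + Fb F (x - t) * indicator {t<..x} y \<partial>F)
          = Fb F x + Fb F x * (1 - Fb F t) + Fb F (x - t) * (Fb F t - Fb F x)"
      using i1 i2 i3 by (simp add: int_chi m1 m2)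
    with A have B: "Fb F (x - t) * (Fb F t - Fb F x) \<le> (1 + d) * Fb F t * Fb F x"
      by (simp add: algebra_simps)
    have "Fb F (x - t) * ((1 - d) * Fb F t) \<le> Fb F (x - t) * (Fb F t - Fb F x)"
      using E(2) Fb_nonneg[of "x - t"] by (intro mult_left_mono) (auto simp: algebra_simps)
    with B have "Fb F (x - t) * (1 - d) * Fb F t \<le> ((1 + e) * Fb F x) * (1 - d) * Fb F t"
      by (simp add: d1 algebra_simps)
    then show ?case using d ft by simp
  qed
qed

lemma shift_bound:
  assumes t: "0 \<le> t" and e: "0 \<le> e" and x2: "\<And>x. x2 \<le> x \<Longrightarrow> Fb F (x - t) \<le> (1 + e) * Fb F x"
  shows "Fb F (x - n * t) \<le> (1 / Fb F x2) * (1 + e) ^ n * Fb F x"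
proof (induction n arbitrary: x)
  case 0
  have "1 \<le> 1 / Fb F x2" using Fb_pos[of x2] Fb_le1[of x2] by simp
  then show ?case using Fb_pos[of x2] Fb_le1[of x2] Fb_nonneg[of x] by (simp add: le_divide_eq mult_left_le)
next
  case (Suc n)
  have eq: "x - Suc n * t = (x - t) - n * t" by (simp add: algebra_simps)
  show ?case
  proof (cases "x2 \<le> x")
    case True
    have "Fb F (x - Suc n * t) \<le> (1 / Fb F x2) * (1 + e) ^ n * Fb F (x - t)"
      unfolding eq by (rule Suc.IH)
    also have "\<dots> \<le> (1 / Fb F x2) * (1 + e) ^ n * ((1 + e) * Fb F x)"
      using x2[OF True] e Fb_pos[of x2] by (intro mult_left_mono) auto
    finally show ?thesis by (simp add: mult_ac)
  next
    case False
    have "Fb F (x - Suc n * t) \<le> 1" by (rule Fb_le1)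
    also have "\<dots> = (1 / Fb F x2) * Fb F x2" using Fb_pos[of x2] by simp
    also have "\<dots> \<le> (1 / Fb F x2) * Fb F x" using False Fb_antimono[of x x2] Fb_pos[of x2] by simp
    also have "\<dots> \<le> (1 / Fb F x2) * (1 + e) ^ Suc n * Fb F x"
    proof -
      have "1 \<le> (1 + e) ^ Suc n" using e by (intro one_le_power) auto
      moreover have "0 \<le> (1 / Fb F x2) * Fb F x" using Fb_pos[of x2] Fb_nonneg[of x] by simp
      ultimately have "((1 / Fb F x2) * Fb F x) * 1 \<le> ((1 / Fb F x2) * Fb F x) * (1 + e) ^ Suc n"
        by (intro mult_left_mono) auto
      then show ?thesis by (simp add: mult_ac)
    qed
    finally show ?thesis .
  qed
qed

end

definition Lmu :: "real measure \<Rightarrow> (real \<Rightarrow> real) \<Rightarrow> real \<Rightarrow> real" where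
  "Lmu \<mu> g z = (\<integral>s. g (z - s) \<partial>\<mu>)"

context nnd
begin

lemma Lmu_good0: "real_distribution \<mu> \<Longrightarrow> good0 g \<Longrightarrow> good0 (Lmu \<mu> g)"
  unfolding Lmu_def[abs_def] by (rule real_distribution.good0_int_antimono)

lemma Lmu_Iop:
  assumes mu: "real_distribution \<mu>" and g: "good0 g"
  shows "Lmu \<mu> (Iop F B g) z = Iop F B (Lmu \<mu> g) z"
proof -
  interpret mu: real_distribution \<mu> by fact
  interpret pair_sigma_finite \<mu> F
    by (intro pair_sigma_finite.intro mu.sigma_finite_measure_axioms sigma_finite_measure_axioms)
  note [measurable] = good0_meas[OF g]
  have [measurable_cong]: "sets \<mu> = sets borel" by (simp add: mu.events_eq_borel)
  have meas: "(\<lambda>(s, y). g (z - s - y)) \<in> borel_measurable (\<mu> \<Otimes>\<^sub>M F)" by measurable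
  have h: "good0 (\<lambda>w. \<integral>y. g (w - y) \<partial>F)" by (rule good0_int_antimono[OF g])
  have "Lmu \<mu> (Iop F B g) z = (\<integral>s. (1 - B) * g (z - s) + B * (\<integral>y. g (z - s - y) \<partial>F) \<partial>\<mu>)"
    unfolding Lmu_def Iop_def ..
  also have "\<dots> = (1 - B) * (\<integral>s. g (z - s) \<partial>\<mu>) + B * (\<integral>s. (\<integral>y. g (z - s - y) \<partial>F) \<partial>\<mu>)"
    using mu.good0_int[OF g, of z] mu.good0_int[OF h, of z] by simp
  also have "(\<integral>s. (\<integral>y. g (z - s - y) \<partial>F) \<partial>\<mu>) = (\<integral>y. (\<integral>s. g (z - s - y) \<partial>\<mu>) \<partial>F)"
  proof (rule Fubini_integral[symmetric])
    show "integrable (\<mu> \<Otimes>\<^sub>M F) (\<lambda>(s, y). g (z - s - y))"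
      using g meas unfolding good0_def
      by (intro finite_measure.integrable_const_bound[where B=1] finite_measure_pair_measure
          mu.finite_measure_axioms finite_measure_axioms) auto
  qed
  also have "\<dots> = (\<integral>y. Lmu \<mu> g (z - y) \<partial>F)"
    unfolding Lmu_def by (simp add: algebra_simps)
  finally show ?thesis unfolding Iop_def Lmu_def by simp
qed

lemma Iop_pow_good0: "good0 g \<Longrightarrow> 0 \<le> B \<Longrightarrow> B \<le> 1 \<Longrightarrow> good0 ((Iop F B ^^ k) g)"
  by (induction k) (auto intro: good0_Iop)

lemma Lmu_Iop_pow:
  assumes mu: "real_distribution \<mu>" and g: "good0 g" and B: "0 \<le> B" "B \<le> 1"
  shows "Lmu \<mu> ((Iop F B ^^ k) g) = (Iop F B ^^ k) (Lmu \<mu> g)"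
proof (induction k)
  case 0 then show ?case by simp
next
  case (Suc k)
  show ?case
    by (simp add: fun_eq_iff Lmu_Iop[OF mu Iop_pow_good0[OF g B]] Suc)
qed

lemma Iop_pow_mono:
  assumes "good0 g" "good0 h" "\<And>x. g x \<le> h x" "0 \<le> B" "B \<le> 1"
  shows "(Iop F B ^^ k) g x \<le> (Iop F B ^^ k) h x"
proof (induction k arbitrary: x)
  case 0 then show ?case using assms by simp
next
  case (Suc k)
  show ?case using Suc assms
    by (simp add: Iop_mono Iop_pow_good0)
qed

lemma Iop_shift: "Iop F B (\<lambda>z. g (z - c)) w = Iop F B g (w - c)"
  unfolding Iop_def by (simp add: algebra_simps)

lemma Iop_pow_shift: "(Iop F B ^^ k) (\<lambda>z. g (z - c)) w = (Iop F B ^^ k) g (w - c)"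
proof (induction k arbitrary: w)
  case 0 then show ?case by simp
next
  case (Suc k)
  have e: "(Iop F B ^^ k) (\<lambda>z. g (z - c)) = (\<lambda>z. (Iop F B ^^ k) g (z - c))"
    using Suc by (simp add: fun_eq_iff)
  have "(Iop F B ^^ Suc k) (\<lambda>z. g (z - c)) = Iop F B (\<lambda>z. (Iop F B ^^ k) g (z - c))"
    by (simp add: e)
  then show ?case by (simp add: Iop_shift)
qed

lemma good0_shift: "good0 g \<Longrightarrow> good0 (\<lambda>z. g (z - c))"
  unfolding good0_def antimono_def by auto

end

lemma (in prob_space) transfer:
  assumes F: "nnd F" and ind: "indep_var borel S borel X" and B: "0 \<le> B" "B \<le> 1"
    and hS: "\<And>z. prob {\<omega>\<in>space M. z < S \<omega>} \<le> Phi F B n (z - s0)"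
    and hX: "\<And>t. prob {\<omega>\<in>space M. t < X \<omega>} \<le> Phi F B k (t - x0)"
  shows "prob {\<omega>\<in>space M. x < S \<omega> + X \<omega>} \<le> Phi F B (n + k) (x - s0 - x0)"
proof -
  interpret F: nnd F by fact
  have rvS[measurable]: "S \<in> borel_measurable M" using indep_var_rv1[OF ind] by simp
  have rvX[measurable]: "X \<in> borel_measurable M" using indep_var_rv2[OF ind] by simp
  define \<mu> where "\<mu> = distr M borel S"
  define \<nu> where "\<nu> = distr M borel X"
  have mu: "real_distribution \<mu>" unfolding \<mu>_def by (rule real_distribution_distr) simp
  have nu: "real_distribution \<nu>" unfolding \<nu>_def by (rule real_distribution_distr) simp
  interpret mu: real_distribution \<mu> by (rule mu)
  interpret nu: real_distribution \<nu> by (rule nu)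
  interpret pair_sigma_finite \<mu> \<nu>
    by (intro pair_sigma_finite.intro mu.sigma_finite_measure_axioms nu.sigma_finite_measure_axioms)
  have joint: "\<mu> \<Otimes>\<^sub>M \<nu> = distr M (borel \<Otimes>\<^sub>M borel) (\<lambda>\<omega>. (S \<omega>, X \<omega>))"
    using ind unfolding indep_var_distribution_eq \<mu>_def \<nu>_def by simp
  define A where "A = {p \<in> space (borel \<Otimes>\<^sub>M borel). x < fst p + snd (p :: real \<times> real)}"
  have A[measurable]: "A \<in> sets (borel \<Otimes>\<^sub>M borel)" unfolding A_def by measurable
  have gk: "good (Phi F B k)" by (rule F.good_Phi[OF B])
  have "emeasure M {\<omega>\<in>space M. x < S \<omega> + X \<omega>} = emeasure (\<mu> \<Otimes>\<^sub>M \<nu>) A"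
    unfolding joint by (subst emeasure_distr[OF _ A]) (auto simp: A_def space_pair_measure intro!: arg_cong[where f="emeasure M"])
  also have "\<dots> = (\<integral>\<^sup>+s. emeasure \<nu> (Pair s -` A) \<partial>\<mu>)"
    by (rule nu.emeasure_pair_measure_alt) (simp add: A)
  also have "\<dots> \<le> (\<integral>\<^sup>+s. ennreal (Phi F B k (x - x0 - s)) \<partial>\<mu>)"
  proof (rule nn_integral_mono)
    fix s
    have "emeasure \<nu> (Pair s -` A) = emeasure M {\<omega>\<in>space M. x - s < X \<omega>}"
      unfolding \<nu>_def by (subst emeasure_distr) (auto simp: A_def space_pair_measure intro!: arg_cong[where f="emeasure M"])
    also have "\<dots> = ennreal (prob {\<omega>\<in>space M. x - s < X \<omega>})" by (simp add: emeasure_eq_measure)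
    also have "\<dots> \<le> ennreal (Phi F B k (x - x0 - s))"
      using hX[of "x - s"] by (intro ennreal_leI) (simp add: algebra_simps)
    finally show "emeasure \<nu> (Pair s -` A) \<le> ennreal (Phi F B k (x - x0 - s))" .
  qed
  also have "\<dots> = ennreal (Lmu \<mu> (Phi F B k) (x - x0))"
    unfolding Lmu_def using gk
    by (intro nn_integral_eq_integral mu.good0_int good_good0) (auto simp: good_def good0_def)
  finally have st1: "prob {\<omega>\<in>space M. x < S \<omega> + X \<omega>} \<le> Lmu \<mu> (Phi F B k) (x - x0)"
    using mu.good0_int_bounds(1)[OF good_good0[OF gk]]
    by (simp add: emeasure_eq_measure Lmu_def)
  have "Lmu \<mu> (Phi F B k) = (Iop F B ^^ k) (Lmu \<mu> chi)"
    unfolding Phi_def by (rule F.Lmu_Iop_pow[OF mu good_good0[OF F.good_chi] B])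
  moreover have "Lmu \<mu> chi z \<le> Phi F B n (z - s0)" for z
  proof -
    have "Lmu \<mu> chi z = measure \<mu> {z<..}"
    proof -
      have "Lmu \<mu> chi z = (\<integral>s. indicator {z<..} s \<partial>\<mu>)"
        unfolding Lmu_def by (intro Bochner_Integration.integral_cong) (auto simp: chi_def indicator_def)
      then show ?thesis by simp
    qed
    also have "\<dots> = prob {\<omega>\<in>space M. z < S \<omega>}"
      unfolding \<mu>_def by (subst measure_distr) (auto intro!: arg_cong[where f=prob])
    finally show ?thesis using hS[of z] by simp
  qed
  ultimately have "Lmu \<mu> (Phi F B k) (x - x0) \<le> (Iop F B ^^ k) (\<lambda>z. Phi F B n (z - s0)) (x - x0)"
    using B by (auto intro!: F.Iop_pow_mono F.Lmu_good0[OF mu] F.good0_shift good_good0[OF F.good_chi]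
        good_good0[OF F.good_Phi])
  also have "\<dots> = Phi F B (n + k) (x - s0 - x0)"
    by (simp add: F.Iop_pow_shift Phi_def funpow_add add.commute algebra_simps)
  finally show ?thesis using st1 by simp
qed

definition nu :: "(nat \<Rightarrow> real measure) \<Rightarrow> (nat \<Rightarrow> nat \<Rightarrow> real measure) \<Rightarrow> (nat \<Rightarrow> nat) \<Rightarrow> nat \<Rightarrow> real measure" where
  "nu \<beta> H p k = (if k = 0 then \<beta> (p 0) else H (p (k - 1)) (p k))"

definition wt :: "(nat \<Rightarrow> real measure) \<Rightarrow> (nat \<Rightarrow> nat \<Rightarrow> real measure) \<Rightarrow> nat \<Rightarrow> (nat \<Rightarrow> nat) \<Rightarrow> real" where
  "wt \<beta> H n p = (\<Prod>k\<le>n. measure (nu \<beta> H p k) UNIV)"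

locale mapl =
  fixes M :: "'a measure" and d :: nat and \<beta> :: "nat \<Rightarrow> real measure"
    and H :: "nat \<Rightarrow> nat \<Rightarrow> real measure" and X :: "nat \<Rightarrow> 'a \<Rightarrow> real" and J :: "nat \<Rightarrow> 'a \<Rightarrow> nat"
  assumes map: "MAP M d \<beta> H X J"
begin

lemma prob: "prob_space M" using map by (simp add: MAP_def)

sublocale prob_space M by (rule prob)

lemma Xm[measurable]: "X n \<in> borel_measurable M" using map by (simp add: MAP_def)
lemma Jm[measurable]: "J n \<in> measurable M (count_space UNIV)" using map by (simp add: MAP_def)
lemma Jd: "\<omega> \<in> space M \<Longrightarrow> J n \<omega> < d" using map by (simp add: MAP_def)
lemma beta_sets: "i < d \<Longrightarrow> sets (\<beta> i) = sets borel" using map by (simp add: MAP_def)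
lemma H_sets: "i < d \<Longrightarrow> j < d \<Longrightarrow> sets (H i j) = sets borel" using map by (simp add: MAP_def)
lemma beta_fin: "i < d \<Longrightarrow> finite_measure (\<beta> i)" using map by (simp add: MAP_def)
lemma H_fin: "i < d \<Longrightarrow> j < d \<Longrightarrow> finite_measure (H i j)" using map by (simp add: MAP_def)
lemma beta_sum: "(\<Sum>i<d. measure (\<beta> i) UNIV) = 1" using map by (simp add: MAP_def)
lemma H_sum: "i < d \<Longrightarrow> (\<Sum>j<d. measure (H i j) UNIV) = 1" using map by (simp add: MAP_def)

lemma map_formula: "\<forall>n (is :: nat \<Rightarrow> nat) (A :: nat \<Rightarrow> real set).
          (\<forall>k\<le>n. is k < d \<and> A k \<in> sets borel) \<longrightarrow>
          measure M {\<omega>\<in>space M. \<forall>k\<le>n. J k \<omega> = is k \<and> X k \<omega> \<in> A k}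
            = measure (\<beta> (is 0)) (A 0) * (\<Prod>k\<in>{1..n}. measure (H (is (k - 1)) (is k)) (A k))"
  using map unfolding MAP_def by (elim conjE) assumption

lemma formula:
  assumes "\<And>k. k \<le> n \<Longrightarrow> p k < d" "\<And>k. k \<le> n \<Longrightarrow> A k \<in> sets borel"
  shows "measure M {\<omega>\<in>space M. \<forall>k\<le>n. J k \<omega> = p k \<and> X k \<omega> \<in> A k} = (\<Prod>k\<le>n. measure (nu \<beta> H p k) (A k))"
proof -
  have "measure M {\<omega>\<in>space M. \<forall>k\<le>n. J k \<omega> = p k \<and> X k \<omega> \<in> A k}
      = measure (\<beta> (p 0)) (A 0) * (\<Prod>k\<in>{1..n}. measure (H (p (k - 1)) (p k)) (A k))"
    using map_formula assms by auto
  also have "\<dots> = (\<Prod>k\<in>insert 0 {1..n}. measure (nu \<beta> H p k) (A k))"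
    by (subst prod.insert) (auto simp: nu_def intro!: prod.cong)
  also have "insert 0 {1..n} = {..n}" by auto
  finally show ?thesis .
qed

definition Ev :: "nat \<Rightarrow> (nat \<Rightarrow> nat) \<Rightarrow> 'a set" where
  "Ev n p = {\<omega>\<in>space M. \<forall>k\<le>n. J k \<omega> = p k}"

lemma Ev_sets[measurable]: "Ev n p \<in> sets M"
proof -
  have "Ev n p = space M \<inter> (\<Inter>k\<in>{..n}. J k -` {p k} \<inter> space M)" unfolding Ev_def by auto
  moreover have "J k -` {p k} \<inter> space M \<in> sets M" for k
    by (rule measurable_sets[OF Jm]) auto
  then have "(\<Inter>k\<in>{..n}. J k -` {p k} \<inter> space M) \<in> sets M"
    by (intro sets.finite_INT) auto
  ultimately show ?thesis by auto
qed

lemma sets_allX: "(\<And>k. k \<le> n \<Longrightarrow> A k \<in> sets borel) \<Longrightarrow> {\<omega>\<in>space M. \<forall>k\<le>n. X k \<omega> \<in> A k} \<in> sets M"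
proof -
  assume A: "\<And>k. k \<le> n \<Longrightarrow> A k \<in> sets borel"
  have "{\<omega>\<in>space M. \<forall>k\<le>n. X k \<omega> \<in> A k} = space M \<inter> (\<Inter>k\<in>{..n}. X k -` A k \<inter> space M)" by auto
  moreover have "X k -` A k \<inter> space M \<in> sets M" if "k \<le> n" for k
    by (rule measurable_sets[OF Xm A[OF that]])
  then have "(\<Inter>k\<in>{..n}. X k -` A k \<inter> space M) \<in> sets M"
    by (intro sets.finite_INT) auto
  ultimately show ?thesis by auto
qed

lemma prob_Ev: assumes "\<And>k. k \<le> n \<Longrightarrow> p k < d" shows "prob (Ev n p) = wt \<beta> H n p"
  using formula[OF assms, where A="\<lambda>_. UNIV"] unfolding Ev_def wt_def by simp

lemma nu_sets: "(\<And>k. k \<le> n \<Longrightarrow> p k < d) \<Longrightarrow> k \<le> n \<Longrightarrow> sets (nu \<beta> H p k) = sets borel"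
  unfolding nu_def by (auto simp: beta_sets H_sets)

lemma nu_fin: "(\<And>k. k \<le> n \<Longrightarrow> p k < d) \<Longrightarrow> k \<le> n \<Longrightarrow> finite_measure (nu \<beta> H p k)"
  unfolding nu_def by (auto simp: beta_fin H_fin)

lemma cond_facts:
  assumes pd: "\<And>k. k \<le> n \<Longrightarrow> p k < d" and w: "0 < wt \<beta> H n p"
  defines "P \<equiv> uniform_measure M (Ev n p)"
  shows "prob_space P"
    and "prob_space.indep_vars P (\<lambda>_. borel) X {..n}"
    and "\<And>k A. k \<le> n \<Longrightarrow> A \<in> sets borel \<Longrightarrow>
            measure P {\<omega>\<in>space P. X k \<omega> \<in> A} = measure (nu \<beta> H p k) A / measure (nu \<beta> H p k) UNIV"
proof -
  have e: "emeasure M (Ev n p) = ennreal (wt \<beta> H n p)"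
    using prob_Ev[OF pd] by (simp add: emeasure_eq_measure)
  show ps: "prob_space P" unfolding P_def
    by (rule prob_space_uniform_measure) (use e w in auto)
  interpret P: prob_space P by (rule ps)
  have mpos: "0 < measure (nu \<beta> H p k) UNIV" if "k \<le> n" for k
  proof -
    have "(\<Prod>k\<le>n. measure (nu \<beta> H p k) UNIV) \<noteq> 0" using w unfolding wt_def by (metis order.strict_implies_not_eq)
    then have "measure (nu \<beta> H p k) UNIV \<noteq> 0" using that by (subst (asm) prod_zero_iff) auto
    then show ?thesis using measure_nonneg[of "nu \<beta> H p k" UNIV] by linarith
  qed
  have PM: "measure P B = measure M (Ev n p \<inter> B) / wt \<beta> H n p" if "B \<in> sets M" for B
    unfolding P_def using that e w prob_Ev[OF pd] by (subst measure_uniform_measure) auto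
  have key: "measure P {\<omega>\<in>space M. \<forall>k\<le>n. X k \<omega> \<in> A k} = (\<Prod>k\<le>n. measure (nu \<beta> H p k) (A k) / measure (nu \<beta> H p k) UNIV)"
    if A: "\<And>k. k \<le> n \<Longrightarrow> A k \<in> sets borel" for A
  proof -
    have "measure P {\<omega>\<in>space M. \<forall>k\<le>n. X k \<omega> \<in> A k}
        = measure M (Ev n p \<inter> {\<omega>\<in>space M. \<forall>k\<le>n. X k \<omega> \<in> A k}) / wt \<beta> H n p"
      using A by (intro PM sets_allX)
    also have "Ev n p \<inter> {\<omega>\<in>space M. \<forall>k\<le>n. X k \<omega> \<in> A k} = {\<omega>\<in>space M. \<forall>k\<le>n. J k \<omega> = p k \<and> X k \<omega> \<in> A k}"
      unfolding Ev_def by auto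
    also have "measure M \<dots> = (\<Prod>k\<le>n. measure (nu \<beta> H p k) (A k))" by (rule formula[OF pd A])
    finally show ?thesis unfolding wt_def by (simp add: prod_dividef)
  qed
  show marg: "measure P {\<omega>\<in>space P. X k \<omega> \<in> A} = measure (nu \<beta> H p k) A / measure (nu \<beta> H p k) UNIV"
    if k: "k \<le> n" and A: "A \<in> sets borel" for k A
  proof -
    have "{\<omega>\<in>space P. X k \<omega> \<in> A} = {\<omega>\<in>space M. \<forall>j\<le>n. X j \<omega> \<in> (if j = k then A else UNIV)}"
      using k by (auto simp: P_def)
    also have "measure P \<dots> = (\<Prod>j\<le>n. measure (nu \<beta> H p j) (if j = k then A else UNIV) / measure (nu \<beta> H p j) UNIV)"
      using A by (intro key) auto
    also have "\<dots> = measure (nu \<beta> H p k) A / measure (nu \<beta> H p k) UNIV"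
    proof -
      have "(\<Prod>j\<le>n. measure (nu \<beta> H p j) (if j = k then A else UNIV) / measure (nu \<beta> H p j) UNIV)
          = (\<Prod>j\<in>{..n}. if j = k then measure (nu \<beta> H p k) A / measure (nu \<beta> H p k) UNIV else 1)"
        using mpos by (intro prod.cong) (auto simp: less_le)
      also have "\<dots> = measure (nu \<beta> H p k) A / measure (nu \<beta> H p k) UNIV"
        using k by (subst prod.delta) auto
      finally show ?thesis .
    qed
    finally show ?thesis .
  qed
  show "P.indep_vars (\<lambda>_. borel) X {..n}"
  proof (subst P.indep_vars_finite[where E="\<lambda>_. sets borel"])
    show "\<forall>A\<in>(\<Pi> i\<in>{..n}. sets (borel :: real measure)). P.prob (\<Inter>j\<in>{..n}. X j -` A j \<inter> space P) = (\<Prod>j\<in>{..n}. P.prob (X j -` A j \<inter> space P))"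
    proof
      fix A assume A: "A \<in> (\<Pi> i\<in>{..n}. sets (borel :: real measure))"
      have "(\<Inter>j\<in>{..n}. X j -` A j \<inter> space P) = {\<omega>\<in>space M. \<forall>k\<le>n. X k \<omega> \<in> A k}" by (auto simp: P_def)
      then have "P.prob (\<Inter>j\<in>{..n}. X j -` A j \<inter> space P) = (\<Prod>k\<le>n. measure (nu \<beta> H p k) (A k) / measure (nu \<beta> H p k) UNIV)"
        using A by (simp add: key[of A] Pi_iff)
      also have "\<dots> = (\<Prod>j\<in>{..n}. P.prob (X j -` A j \<inter> space P))"
      proof (intro prod.cong refl)
        fix j assume "j \<in> {..n}"
        have "X j -` A j \<inter> space P = {\<omega>\<in>space P. X j \<omega> \<in> A j}" by (auto simp: P_def)
        then show "measure (nu \<beta> H p j) (A j) / measure (nu \<beta> H p j) UNIV = P.prob (X j -` A j \<inter> space P)"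
          using marg[of j "A j"] A \<open>j \<in> {..n}\<close> by (auto simp: Pi_iff)
      qed
      finally show "P.prob (\<Inter>j\<in>{..n}. X j -` A j \<inter> space P) = (\<Prod>j\<in>{..n}. P.prob (X j -` A j \<inter> space P))" .
    qed
  next
    show "\<And>i. i \<in> {..n} \<Longrightarrow> P.random_variable borel (X i)"
      by (simp add: P_def measurable_cong_sets[OF sets_uniform_measure refl])
  qed (auto simp: Int_stable_def sets.sigma_sets_eq[of borel, simplified])
qed

end

lemma (in prob_space) sum_bound:
  assumes F: "nnd F" and B: "0 \<le> B" "B \<le> 1"
    and ind: "indep_vars (\<lambda>_. borel) X I" and sub: "{lo..n} \<subseteq> I"
    and tails: "\<And>i t. i \<in> {lo..n} \<Longrightarrow> prob {\<omega>\<in>space M. t < X i \<omega>} \<le> Phi F B k (t - x0)"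
  shows "lo + m \<le> n \<Longrightarrow> prob {\<omega>\<in>space M. x < (\<Sum>i\<in>{lo..lo+m}. X i \<omega>)} \<le> Phi F B (k * (m + 1)) (x - (m + 1) * x0)"
proof (induction m arbitrary: x)
  case 0
  then show ?case using tails[of lo x] by simp
next
  case (Suc m)
  define i where "i = lo + Suc m"
  have ii: "i \<notin> {lo..lo+m}" unfolding i_def by simp
  have ins: "insert i {lo..lo+m} \<subseteq> I" using sub Suc.prems unfolding i_def by auto
  have ind2: "indep_var borel (X i) borel (\<lambda>\<omega>. \<Sum>j\<in>{lo..lo+m}. X j \<omega>)"
    by (rule indep_vars_sum[OF _ ii indep_vars_subset[OF ind ins]]) simp
  have eqs: "{lo..lo + Suc m} = insert i {lo..lo+m}" unfolding i_def by auto
  have "prob {\<omega>\<in>space M. x < X i \<omega> + (\<Sum>j\<in>{lo..lo+m}. X j \<omega>)} \<le> Phi F B (k + k * (m + 1)) (x - x0 - (m + 1) * x0)"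
  proof (rule transfer[OF F ind2 B])
    show "prob {\<omega>\<in>space M. z < X i \<omega>} \<le> Phi F B k (z - x0)" for z
      using tails[of i z] Suc.prems unfolding i_def by auto
    show "prob {\<omega>\<in>space M. t < (\<Sum>j\<in>{lo..lo+m}. X j \<omega>)} \<le> Phi F B (k * (m + 1)) (t - (m + 1) * x0)" for t
      using Suc.IH[of t] Suc.prems by (simp add: ac_simps)
  qed
  moreover have "(\<Sum>j\<in>{lo..lo + Suc m}. X j \<omega>) = X i \<omega> + (\<Sum>j\<in>{lo..lo+m}. X j \<omega>)" for \<omega>
    unfolding eqs using ii by simp
  ultimately show ?case by (simp add: algebra_simps)
qed

context mapl
begin

lemma path_bound:
  assumes pd: "\<And>k. k \<le> n \<Longrightarrow> p k < d" and lo: "lo \<le> n" and F: "nnd F" and B: "0 \<le> B" "B \<le> 1"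
    and dom: "\<And>i t. i \<in> {lo..n} \<Longrightarrow> measure (nu \<beta> H p i) {t<..} \<le> Phi F B k (t - x0) * measure (nu \<beta> H p i) UNIV"
  shows "measure M {\<omega>\<in>Ev n p. x < (\<Sum>i\<in>{lo..n}. X i \<omega>)}
           \<le> wt \<beta> H n p * Phi F B (k * (n - lo + 1)) (x - (n - lo + 1) * x0)"
proof -
  interpret F: nnd F by fact
  have ph: "0 \<le> Phi F B m y" for m y using F.good_Phi[OF B] by (simp add: good_def good0_def)
  define A where "A = {\<omega>\<in>space M. x < (\<Sum>i\<in>{lo..n}. X i \<omega>)}"
  have Am: "A \<in> sets M" unfolding A_def by measurable
  have eqA: "{\<omega>\<in>Ev n p. x < (\<Sum>i\<in>{lo..n}. X i \<omega>)} = Ev n p \<inter> A" unfolding A_def Ev_def by auto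
  have w0: "0 \<le> wt \<beta> H n p" unfolding wt_def by (simp add: prod_nonneg)
  show ?thesis
  proof (cases "wt \<beta> H n p = 0")
    case True
    have "measure M (Ev n p \<inter> A) \<le> measure M (Ev n p)" by (intro finite_measure_mono) auto
    also have "\<dots> = 0" using prob_Ev[OF pd] True by simp
    finally show ?thesis unfolding eqA using True by simp
  next
    case False
    then have w: "0 < wt \<beta> H n p" using w0 by simp
    define P where "P = uniform_measure M (Ev n p)"
    note cf = cond_facts[OF pd w, folded P_def]
    interpret P: prob_space P by (rule cf(1))
    have e: "emeasure M (Ev n p) = ennreal (wt \<beta> H n p)"
      using prob_Ev[OF pd] by (simp add: emeasure_eq_measure)
    have PM: "measure P A = measure M (Ev n p \<inter> A) / wt \<beta> H n p"
      unfolding P_def using Am e w prob_Ev[OF pd] by (subst measure_uniform_measure) auto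
    have mpos: "0 < measure (nu \<beta> H p k) UNIV" if "k \<le> n" for k
    proof -
      have "(\<Prod>k\<le>n. measure (nu \<beta> H p k) UNIV) \<noteq> 0" using w unfolding wt_def by (metis order.strict_implies_not_eq)
      then have "measure (nu \<beta> H p k) UNIV \<noteq> 0" using that by (subst (asm) prod_zero_iff) auto
      then show ?thesis using measure_nonneg[of "nu \<beta> H p k" UNIV] by linarith
    qed
    have tails: "P.prob {\<omega>\<in>space P. t < X i \<omega>} \<le> Phi F B k (t - x0)" if i: "i \<in> {lo..n}" for i t
    proof -
      have "P.prob {\<omega>\<in>space P. t < X i \<omega>} = P.prob {\<omega>\<in>space P. X i \<omega> \<in> {t<..}}" by simp
      also have "\<dots> = measure (nu \<beta> H p i) {t<..} / measure (nu \<beta> H p i) UNIV"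
        using i by (intro cf(3)) auto
      also have "\<dots> \<le> Phi F B k (t - x0)"
        using dom[OF i, of t] mpos[of i] i by (simp add: divide_le_eq)
      finally show ?thesis .
    qed
    have "P.prob {\<omega>\<in>space P. x < (\<Sum>i\<in>{lo..lo + (n - lo)}. X i \<omega>)}
           \<le> Phi F B (k * (n - lo + 1)) (x - (n - lo + 1) * x0)"
      using P.sum_bound[OF F B cf(2), of lo n k x0 "n - lo" x] tails lo by (auto simp: ac_simps)
    then have "measure P A \<le> Phi F B (k * (n - lo + 1)) (x - (n - lo + 1) * x0)"
      using lo unfolding A_def by (simp add: P_def)
    then show ?thesis unfolding eqA PM using w lo by (simp add: divide_le_eq mult.commute of_nat_diff ac_simps)
  qed
qed

end

context mapl
begin

definition G :: "nat \<Rightarrow> (nat \<Rightarrow> nat set) \<Rightarrow> 'a set" where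
  "G n C = {\<omega>\<in>space M. \<forall>k\<le>n. J k \<omega> \<in> C k}"

definition Paths :: "nat \<Rightarrow> (nat \<Rightarrow> nat set) \<Rightarrow> (nat \<Rightarrow> nat) set" where
  "Paths n C = PiE {..n} (\<lambda>k. C k \<inter> {..<d})"

lemma G_sets[measurable]: "G n C \<in> sets M"
proof -
  have "G n C = space M \<inter> (\<Inter>k\<in>{..n}. J k -` C k \<inter> space M)" unfolding G_def by auto
  moreover have "J k -` C k \<inter> space M \<in> sets M" for k
    by (rule measurable_sets[OF Jm]) auto
  then have "(\<Inter>k\<in>{..n}. J k -` C k \<inter> space M) \<in> sets M"
    by (intro sets.finite_INT) auto
  ultimately show ?thesis by auto
qed

lemma Paths_finite: "finite (Paths n C)"
  unfolding Paths_def by (intro finite_PiE) auto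

lemma Paths_d: "p \<in> Paths n C \<Longrightarrow> k \<le> n \<Longrightarrow> p k < d"
  unfolding Paths_def by (auto simp: PiE_iff)

lemma G_split:
  assumes S: "S \<in> sets M"
  shows "measure M (G n C \<inter> S) = (\<Sum>p\<in>Paths n C. measure M (Ev n p \<inter> S))"
proof -
  have eq: "G n C \<inter> S = (\<Union>p\<in>Paths n C. Ev n p \<inter> S)"
  proof (intro equalityI subsetI)
    fix \<omega> assume w: "\<omega> \<in> G n C \<inter> S"
    then have "\<omega> \<in> space M" unfolding G_def by auto
    define p where "p = restrict (\<lambda>k. J k \<omega>) {..n}"
    have "p \<in> Paths n C" using w Jd[OF \<open>\<omega> \<in> space M\<close>] unfolding p_def Paths_def G_def by auto
    moreover have "\<omega> \<in> Ev n p \<inter> S" using w unfolding Ev_def p_def G_def by auto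
    ultimately show "\<omega> \<in> (\<Union>p\<in>Paths n C. Ev n p \<inter> S)" by auto
  next
    fix \<omega> assume "\<omega> \<in> (\<Union>p\<in>Paths n C. Ev n p \<inter> S)"
    then show "\<omega> \<in> G n C \<inter> S" unfolding Ev_def G_def Paths_def by (auto simp: PiE_iff)
  qed
  have disj: "disjoint_family_on (\<lambda>p. Ev n p \<inter> S) (Paths n C)"
    unfolding disjoint_family_on_def
  proof (intro ballI impI)
    fix p q assume p: "p \<in> Paths n C" and q: "q \<in> Paths n C" and ne: "p \<noteq> q"
    from p q ne obtain k where "k \<le> n" "p k \<noteq> q k"
      unfolding Paths_def by (metis PiE_ext atMost_iff)
    then show "Ev n p \<inter> S \<inter> (Ev n q \<inter> S) = {}" unfolding Ev_def by auto
  qed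
  have "measure M (\<Union>p\<in>Paths n C. Ev n p \<inter> S) = (\<Sum>p\<in>Paths n C. measure M (Ev n p \<inter> S))"
    by (rule finite_measure_finite_Union[OF Paths_finite _ disj]) (use S in auto)
  with eq show ?thesis by simp
qed

lemma wt_Suc: "wt \<beta> H (Suc n) (p(Suc n := j)) = wt \<beta> H n p * measure (H (p n) j) UNIV"
proof -
  have "wt \<beta> H (Suc n) (p(Suc n := j)) = (\<Prod>k\<le>n. measure (nu \<beta> H (p(Suc n := j)) k) UNIV) * measure (nu \<beta> H (p(Suc n := j)) (Suc n)) UNIV"
    unfolding wt_def by simp
  also have "(\<Prod>k\<le>n. measure (nu \<beta> H (p(Suc n := j)) k) UNIV) = wt \<beta> H n p"
    unfolding wt_def by (intro prod.cong) (auto simp: nu_def)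
  also have "measure (nu \<beta> H (p(Suc n := j)) (Suc n)) UNIV = measure (H (p n) j) UNIV"
    by (simp add: nu_def)
  finally show ?thesis .
qed

lemma Ev_Suc: "Ev n p \<inter> {\<omega>\<in>space M. J (Suc n) \<omega> = j} = Ev (Suc n) (p(Suc n := j))"
  unfolding Ev_def by (auto simp: le_Suc_eq)

lemma Ev_Jn: "Ev n p \<inter> {\<omega>\<in>space M. J n \<omega> = i} = (if p n = i then Ev n p else {})"
  unfolding Ev_def by auto

lemma Jeq_sets[measurable]: "{\<omega>\<in>space M. J n \<omega> = j} \<in> sets M"
  by measurable

lemma markov_step:
  assumes j: "j < d"
  shows "measure M (G n C \<inter> {\<omega>\<in>space M. J (Suc n) \<omega> = j})
       = (\<Sum>i<d. measure M (G n C \<inter> {\<omega>\<in>space M. J n \<omega> = i}) * measure (H i j) UNIV)"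
proof -
  have "measure M (G n C \<inter> {\<omega>\<in>space M. J (Suc n) \<omega> = j})
      = (\<Sum>p\<in>Paths n C. measure M (Ev n p \<inter> {\<omega>\<in>space M. J (Suc n) \<omega> = j}))"
    by (rule G_split) measurable
  also have "\<dots> = (\<Sum>p\<in>Paths n C. wt \<beta> H n p * measure (H (p n) j) UNIV)"
  proof (intro sum.cong refl)
    fix p assume p: "p \<in> Paths n C"
    have "measure M (Ev n p \<inter> {\<omega>\<in>space M. J (Suc n) \<omega> = j}) = prob (Ev (Suc n) (p(Suc n := j)))"
      by (simp add: Ev_Suc)
    also have "\<dots> = wt \<beta> H (Suc n) (p(Suc n := j))"
      by (rule prob_Ev) (use Paths_d[OF p] j in \<open>auto simp: le_Suc_eq\<close>)
    finally show "measure M (Ev n p \<inter> {\<omega>\<in>space M. J (Suc n) \<omega> = j}) = wt \<beta> H n p * measure (H (p n) j) UNIV"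
      by (simp add: wt_Suc)
  qed
  also have "\<dots> = (\<Sum>i<d. \<Sum>p\<in>{p\<in>Paths n C. p n = i}. wt \<beta> H n p * measure (H (p n) j) UNIV)"
    by (rule sum.group[symmetric]) (auto simp: Paths_finite Paths_d)
  also have "\<dots> = (\<Sum>i<d. measure M (G n C \<inter> {\<omega>\<in>space M. J n \<omega> = i}) * measure (H i j) UNIV)"
  proof (intro sum.cong refl)
    fix i assume "i \<in> {..<d}"
    have "measure M (G n C \<inter> {\<omega>\<in>space M. J n \<omega> = i}) = (\<Sum>p\<in>Paths n C. measure M (Ev n p \<inter> {\<omega>\<in>space M. J n \<omega> = i}))"
      by (rule G_split) measurable
    also have "\<dots> = (\<Sum>p\<in>Paths n C. if p n = i then wt \<beta> H n p else 0)"
      by (intro sum.cong refl) (auto simp: Ev_Jn prob_Ev Paths_d)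
    also have "\<dots> = (\<Sum>p\<in>{p\<in>Paths n C. p n = i}. wt \<beta> H n p)"
      by (simp add: sum.inter_filter[symmetric] Paths_finite)
    finally show "(\<Sum>p\<in>{p\<in>Paths n C. p n = i}. wt \<beta> H n p * measure (H (p n) j) UNIV)
        = measure M (G n C \<inter> {\<omega>\<in>space M. J n \<omega> = i}) * measure (H i j) UNIV"
      by (simp add: sum_distrib_right)
  qed
  finally show ?thesis .
qed

end

fun vg :: "nat \<Rightarrow> (nat \<Rightarrow> nat \<Rightarrow> real) \<Rightarrow> (nat \<Rightarrow> real) \<Rightarrow> (nat \<Rightarrow> nat set) \<Rightarrow> nat \<Rightarrow> nat \<Rightarrow> real" where
  "vg d P v C 0 j = (if j \<in> C 0 then v j else 0)"
| "vg d P v C (Suc n) j = (if j \<in> C (Suc n) then (\<Sum>i<d. vg d P v C n i * P i j) else 0)"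

context mapl
begin

lemma G_vg: "j < d \<Longrightarrow> measure M (G n C \<inter> {\<omega>\<in>space M. J n \<omega> = j})
    = vg d (\<lambda>i j. measure (H i j) UNIV) (\<lambda>i. measure (\<beta> i) UNIV) C n j"
proof (induction n arbitrary: j)
  case 0
  show ?case
  proof (cases "j \<in> C 0")
    case True
    have "G 0 C \<inter> {\<omega>\<in>space M. J 0 \<omega> = j} = Ev 0 (\<lambda>_. j)" unfolding G_def Ev_def using True by auto
    then show ?thesis using True prob_Ev[of 0 "\<lambda>_. j"] 0 by (simp add: wt_def nu_def)
  next
    case False
    have "G 0 C \<inter> {\<omega>\<in>space M. J 0 \<omega> = j} = {}" unfolding G_def using False by auto
    then show ?thesis using False by simp
  qed
next
  case (Suc n)
  show ?case
  proof (cases "j \<in> C (Suc n)")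
    case True
    have "G (Suc n) C \<inter> {\<omega>\<in>space M. J (Suc n) \<omega> = j} = G n C \<inter> {\<omega>\<in>space M. J (Suc n) \<omega> = j}"
      unfolding G_def using True by (auto simp: le_Suc_eq)
    then show ?thesis using True markov_step[OF Suc.prems, of n C] Suc.IH by simp
  next
    case False
    have "G (Suc n) C \<inter> {\<omega>\<in>space M. J (Suc n) \<omega> = j} = {}" unfolding G_def using False by auto
    then show ?thesis using False by simp
  qed
qed

lemma G_total: "measure M (G n C) = (\<Sum>j<d. vg d (\<lambda>i j. measure (H i j) UNIV) (\<lambda>i. measure (\<beta> i) UNIV) C n j)"
proof -
  have "G n C = (\<Union>j\<in>{..<d}. G n C \<inter> {\<omega>\<in>space M. J n \<omega> = j})"
    using Jd unfolding G_def by auto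
  moreover have "measure M (\<Union>j\<in>{..<d}. G n C \<inter> {\<omega>\<in>space M. J n \<omega> = j}) = (\<Sum>j<d. measure M (G n C \<inter> {\<omega>\<in>space M. J n \<omega> = j}))"
    by (rule finite_measure_finite_Union) (auto simp: disjoint_family_on_def)
  ultimately have "measure M (G n C) = (\<Sum>j<d. measure M (G n C \<inter> {\<omega>\<in>space M. J n \<omega> = j}))"
    by simp
  then show ?thesis by (simp add: G_vg)
qed

end

definition NZ :: "nat set" where "NZ = {j. j \<noteq> 0}"
definition Ctab :: "nat \<Rightarrow> nat set" where "Ctab k = (if k = 0 then UNIV else NZ)"

locale stoch =
  fixes d :: nat and P :: "nat \<Rightarrow> nat \<Rightarrow> real"
  assumes d1: "1 \<le> d" and st: "stochastic_mat d P" and irr: "irreducible_mat d P"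
begin

lemma P_nonneg: "i < d \<Longrightarrow> j < d \<Longrightarrow> 0 \<le> P i j" using st by (simp add: stochastic_mat_def)
lemma P_sum: "i < d \<Longrightarrow> (\<Sum>j<d. P i j) = 1" using st by (simp add: stochastic_mat_def)

lemma vg_nonneg: "(\<And>i. i < d \<Longrightarrow> 0 \<le> v i) \<Longrightarrow> j < d \<Longrightarrow> 0 \<le> vg d P v C n j"
  by (induction n arbitrary: j) (auto intro!: sum_nonneg mult_nonneg_nonneg P_nonneg)

lemma vg_sum_Suc:
  assumes v: "\<And>i. i < d \<Longrightarrow> 0 \<le> v i"
  shows "(\<Sum>j<d. vg d P v C (Suc n) j) \<le> (\<Sum>j<d. vg d P v C n j)"
proof -
  have "(\<Sum>j<d. vg d P v C (Suc n) j) \<le> (\<Sum>j<d. \<Sum>i<d. vg d P v C n i * P i j)"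
    by (intro sum_mono) (auto intro!: sum_nonneg mult_nonneg_nonneg P_nonneg vg_nonneg v)
  also have "\<dots> = (\<Sum>i<d. vg d P v C n i * (\<Sum>j<d. P i j))"
    by (subst sum.swap) (simp add: sum_distrib_left)
  also have "\<dots> = (\<Sum>i<d. vg d P v C n i)" by (simp add: P_sum)
  finally show ?thesis .
qed

lemma vg_sum_mono:
  assumes v: "\<And>i. i < d \<Longrightarrow> 0 \<le> v i" and "m \<le> n"
  shows "(\<Sum>j<d. vg d P v C n j) \<le> (\<Sum>j<d. vg d P v C m j)"
  using assms(2)
proof (induction n)
  case 0 then show ?case by simp
next
  case (Suc n)
  show ?case
  proof (cases "m = Suc n")
    case True then show ?thesis by simp
  next
    case False
    then have "m \<le> n" using Suc.prems by simp
    have "(\<Sum>j<d. vg d P v C (Suc n) j) \<le> (\<Sum>j<d. vg d P v C n j)" by (rule vg_sum_Suc) (rule v)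
    then show ?thesis using Suc.IH \<open>m \<le> n\<close> by linarith
  qed
qed

lemma vg_sum_le_v:
  assumes v: "\<And>i. i < d \<Longrightarrow> 0 \<le> v i"
  shows "(\<Sum>j<d. vg d P v C n j) \<le> (\<Sum>j<d. v j)"
proof -
  have "(\<Sum>j<d. vg d P v C n j) \<le> (\<Sum>j<d. vg d P v C 0 j)" by (rule vg_sum_mono[OF v]) auto
  also have "\<dots> \<le> (\<Sum>j<d. v j)" by (intro sum_mono) (auto simp: v)
  finally show ?thesis .
qed

lemma vg_restart:
  "vg d P v C (a + t) j = vg d P (vg d P v C a) (\<lambda>k. if k = 0 then UNIV else C (a + k)) t j"
  by (induction t arbitrary: j) auto

lemma vg_linear: "j < d \<Longrightarrow> vg d P v C n j = (\<Sum>i<d. v i * vg d P (\<lambda>k. if k = i then 1 else 0) C n j)"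
proof (induction n arbitrary: j)
  case 0
  have "(\<Sum>i<d. v i * vg d P (\<lambda>k. if k = i then 1 else 0) C 0 j) = (\<Sum>i<d. if i = j then (if j \<in> C 0 then v j else 0) else 0)"
    by (intro sum.cong) auto
  also have "\<dots> = (if j \<in> C 0 then v j else 0)" using 0 by (subst sum.delta) auto
  finally show ?case by simp
next
  case (Suc n)
  have "vg d P v C (Suc n) j = (if j \<in> C (Suc n) then (\<Sum>l<d. (\<Sum>i<d. v i * vg d P (\<lambda>k. if k = i then 1 else 0) C n l) * P l j) else 0)"
    using Suc.IH by simp
  also have "\<dots> = (\<Sum>i<d. v i * vg d P (\<lambda>k. if k = i then 1 else 0) C (Suc n) j)"
    by (auto simp: sum_distrib_right sum_distrib_left mult.assoc intro: sum.swap)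
  finally show ?case .
qed

lemma mat_pow_nonneg: "i < d \<Longrightarrow> j < d \<Longrightarrow> 0 \<le> mat_pow d P n i j"
  by (induction n arbitrary: j) (auto intro!: sum_nonneg mult_nonneg_nonneg P_nonneg)

lemma mat_pow_sum: "i < d \<Longrightarrow> (\<Sum>j<d. mat_pow d P n i j) = 1"
proof (induction n)
  case 0 then show ?case by (simp add: sum.delta)
next
  case (Suc n)
  have "(\<Sum>j<d. mat_pow d P (Suc n) i j) = (\<Sum>k<d. mat_pow d P n i k * (\<Sum>j<d. P k j))"
    by (simp add: sum_distrib_left) (rule sum.swap)
  also have "\<dots> = 1" using Suc by (simp add: P_sum)
  finally show ?case .
qed

lemma vg_le_mat_pow: "i < d \<Longrightarrow> j < d \<Longrightarrow> vg d P (\<lambda>k. if k = i then 1 else 0) Ctab n j \<le> mat_pow d P n i j"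
proof (induction n arbitrary: j)
  case 0 then show ?case by (simp add: Ctab_def)
next
  case (Suc n)
  show ?case
  proof (cases "j \<in> Ctab (Suc n)")
    case True
    then show ?thesis using Suc
      by (auto intro!: sum_mono mult_right_mono P_nonneg)
  next
    case False then show ?thesis using Suc mat_pow_nonneg[of i j "Suc n"] by simp
  qed
qed

lemma vg_delta_sum:
  assumes i: "i < d" and n: "1 \<le> n"
  shows "(\<Sum>j<d. vg d P (\<lambda>k. if k = i then 1 else 0) Ctab n j) \<le> 1 - mat_pow d P n i 0"
proof -
  obtain m where m: "n = Suc m" using n by (cases n) auto
  have z: "vg d P (\<lambda>k. if k = i then 1 else 0) Ctab n 0 = 0" unfolding m by (simp add: Ctab_def NZ_def)
  have "(\<Sum>j<d. vg d P (\<lambda>k. if k = i then 1 else 0) Ctab n j) = (\<Sum>j\<in>{..<d}-{0}. vg d P (\<lambda>k. if k = i then 1 else 0) Ctab n j)"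
    using d1 z by (subst sum.remove[of _ 0]) auto
  also have "\<dots> \<le> (\<Sum>j\<in>{..<d}-{0}. mat_pow d P n i j)"
    by (intro sum_mono vg_le_mat_pow i) auto
  also have "\<dots> = 1 - mat_pow d P n i 0"
    using d1 mat_pow_sum[OF i, of n] by (subst (asm) sum.remove[of _ 0]) auto
  finally show ?thesis .
qed

lemma contraction_exists:
  obtains N \<eta> where "1 \<le> N" "0 < \<eta>" "\<eta> \<le> 1"
    "\<And>i. i < d \<Longrightarrow> i \<noteq> 0 \<Longrightarrow> (\<Sum>j<d. vg d P (\<lambda>k. if k = i then 1 else 0) Ctab N j) \<le> 1 - \<eta>"
proof -
  have "\<forall>i\<in>{1..<d}. \<exists>n. 0 < mat_pow d P n i 0"
    using irr d1 unfolding irreducible_mat_def by auto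
  then obtain nn where nn: "\<And>i. i \<in> {1..<d} \<Longrightarrow> 0 < mat_pow d P (nn i) i 0" by metis
  have nn1: "1 \<le> nn i" if "i \<in> {1..<d}" for i
    using nn[OF that] that by (cases "nn i") auto
  define N where "N = Max (insert 1 (nn ` {1..<d}))"
  define \<eta> where "\<eta> = Min (insert 1 ((\<lambda>i. mat_pow d P (nn i) i 0) ` {1..<d}))"
  have N1: "1 \<le> N" unfolding N_def by simp
  have eta: "0 < \<eta>" unfolding \<eta>_def using nn by (subst Min_gr_iff) auto
  have eta1: "\<eta> \<le> 1" unfolding \<eta>_def by (intro Min_le) auto
  show ?thesis
  proof (rule that[OF N1 eta eta1])
    fix i assume i: "i < d" "i \<noteq> 0"
    then have ii: "i \<in> {1..<d}" by auto
    have "nn i \<le> N" unfolding N_def using ii by (intro Max_ge) auto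
    have "(\<Sum>j<d. vg d P (\<lambda>k. if k = i then 1 else 0) Ctab N j) \<le> (\<Sum>j<d. vg d P (\<lambda>k. if k = i then 1 else 0) Ctab (nn i) j)"
      by (rule vg_sum_mono) (auto simp: \<open>nn i \<le> N\<close>)
    also have "\<dots> \<le> 1 - mat_pow d P (nn i) i 0" by (rule vg_delta_sum[OF i(1) nn1[OF ii]])
    also have "\<dots> \<le> 1 - \<eta>"
    proof -
      have "\<eta> \<le> mat_pow d P (nn i) i 0" unfolding \<eta>_def by (rule Min_le) (use ii in auto)
      then show ?thesis by simp
    qed
    finally show "(\<Sum>j<d. vg d P (\<lambda>k. if k = i then 1 else 0) Ctab N j) \<le> 1 - \<eta>" .
  qed
qed

end

context stoch
begin

lemma vg_cong_C: "(\<And>k. k \<le> n \<Longrightarrow> C k = C' k) \<Longrightarrow> vg d P v C n j = vg d P v C' n j"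
  by (induction n arbitrary: j) auto

lemma vg_mask: "vg d P v C n j = vg d P (\<lambda>j. if j \<in> C 0 then v j else 0) (C(0 := UNIV)) n j"
  by (induction n arbitrary: j) auto

lemma vg_zero: "v 0 = 0 \<Longrightarrow> vg d P v Ctab n 0 = 0"
  by (cases n) (auto simp: Ctab_def NZ_def)

lemma Ctab_restart: "(\<lambda>k. if k = 0 then UNIV else Ctab (a + k)) = Ctab"
  by (auto simp: Ctab_def fun_eq_iff)

end

locale stochN = stoch +
  fixes N :: nat and \<eta> :: real
  assumes N1: "1 \<le> N" and eta: "0 < \<eta>" "\<eta> \<le> 1"
    and contr: "\<And>i. i < d \<Longrightarrow> i \<noteq> 0 \<Longrightarrow> (\<Sum>j<d. vg d P (\<lambda>k. if k = i then 1 else 0) Ctab N j) \<le> 1 - \<eta>"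
begin

lemma contr_v:
  assumes v: "\<And>i. i < d \<Longrightarrow> 0 \<le> v i" and v0: "v 0 = 0"
  shows "(\<Sum>j<d. vg d P v Ctab N j) \<le> (1 - \<eta>) * (\<Sum>j<d. v j)"
proof -
  have "(\<Sum>j<d. vg d P v Ctab N j) = (\<Sum>j<d. \<Sum>i<d. v i * vg d P (\<lambda>k. if k = i then 1 else 0) Ctab N j)"
    by (intro sum.cong refl vg_linear) auto
  also have "\<dots> = (\<Sum>i<d. v i * (\<Sum>j<d. vg d P (\<lambda>k. if k = i then 1 else 0) Ctab N j))"
    by (subst sum.swap) (simp add: sum_distrib_left)
  also have "\<dots> \<le> (\<Sum>i<d. v i * (1 - \<eta>))"
  proof (intro sum_mono)
    fix i assume i: "i \<in> {..<d}"
    show "v i * (\<Sum>j<d. vg d P (\<lambda>k. if k = i then 1 else 0) Ctab N j) \<le> v i * (1 - \<eta>)"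
    proof (cases "i = 0")
      case True then show ?thesis using v0 by simp
    next
      case False then show ?thesis using i contr[of i] v[of i] by (intro mult_left_mono) auto
    qed
  qed
  also have "(\<Sum>i<d. v i * (1 - \<eta>)) = (1 - \<eta>) * (\<Sum>j<d. v j)"
    by (subst mult.commute) (simp add: sum_distrib_right)
  finally show ?thesis .
qed

lemma iter:
  assumes v: "\<And>i. i < d \<Longrightarrow> 0 \<le> v i" and v0: "v 0 = 0"
  shows "(\<Sum>j<d. vg d P v Ctab (m * N) j) \<le> (1 - \<eta>) ^ m * (\<Sum>j<d. v j)"
proof (induction m)
  case 0
  then show ?case by (simp add: Ctab_def)
next
  case (Suc m)
  define w where "w = vg d P v Ctab (m * N)"
  have "(\<Sum>j<d. vg d P v Ctab (Suc m * N) j) = (\<Sum>j<d. vg d P w Ctab N j)"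
  proof -
    have "vg d P v Ctab (m * N + N) j = vg d P w Ctab N j" for j
      unfolding w_def by (subst vg_restart) (simp add: Ctab_restart)
    then show ?thesis by (simp add: add.commute)
  qed
  also have "\<dots> \<le> (1 - \<eta>) * (\<Sum>j<d. w j)"
    by (rule contr_v) (auto simp: w_def vg_nonneg v vg_zero v0)
  also have "\<dots> \<le> (1 - \<eta>) * ((1 - \<eta>) ^ m * (\<Sum>j<d. v j))"
    using Suc eta unfolding w_def by (intro mult_left_mono) auto
  finally show ?case by simp
qed

lemma geo:
  assumes v: "\<And>i. i < d \<Longrightarrow> 0 \<le> v i" and v0: "v 0 = 0"
  shows "(\<Sum>j<d. vg d P v Ctab t j) \<le> (1 - \<eta>) ^ (t div N) * (\<Sum>j<d. v j)"
proof -
  have "(t div N) * N \<le> t" by simp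
  then have "(\<Sum>j<d. vg d P v Ctab t j) \<le> (\<Sum>j<d. vg d P v Ctab ((t div N) * N) j)"
    by (intro vg_sum_mono v)
  also have "\<dots> \<le> (1 - \<eta>) ^ (t div N) * (\<Sum>j<d. v j)" by (rule iter[where v=v, OF v v0])
  finally show ?thesis .
qed

end

definition C0 :: "nat \<Rightarrow> nat \<Rightarrow> nat set" where
  "C0 a k = (if k < a then NZ else {0})"

definition Cx :: "nat \<Rightarrow> nat \<Rightarrow> nat set" where
  "Cx a k = (if k = a then {0} else NZ)"

locale mapst = mapl M d \<beta> H X J + stochN d "\<lambda>i j. measure (H i j) UNIV" N \<eta>
  for M :: "'a measure" and d \<beta> H X J N \<eta>
begin

abbreviation "Pm \<equiv> \<lambda>i j. measure (H i j) UNIV"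
abbreviation "bm \<equiv> \<lambda>i. measure (\<beta> i) UNIV"

lemma bm_nonneg: "0 \<le> bm i" by simp

lemma no_zero: "measure M (G L (\<lambda>_. NZ)) \<le> (1 - \<eta>) ^ (L div N)"
proof -
  have "measure M (G L (\<lambda>_. NZ)) = (\<Sum>j<d. vg d Pm bm (\<lambda>_. NZ) L j)" by (rule G_total)
  also have "\<dots> = (\<Sum>j<d. vg d Pm (\<lambda>j. if j \<in> NZ then bm j else 0) Ctab L j)"
    by (subst vg_mask) (intro sum.cong refl vg_cong_C, auto simp: Ctab_def)
  also have "\<dots> \<le> (1 - \<eta>) ^ (L div N) * (\<Sum>j<d. (\<lambda>j. if j \<in> NZ then bm j else 0) j)"
    by (rule geo) (auto simp: NZ_def)
  also have "\<dots> \<le> (1 - \<eta>) ^ (L div N) * 1"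
  proof (intro mult_left_mono)
    show "(\<Sum>j<d. (\<lambda>j. if j \<in> NZ then bm j else 0) j) \<le> 1"
    proof -
      have "(\<Sum>j<d. (\<lambda>j. if j \<in> NZ then bm j else 0) j) \<le> (\<Sum>j<d. bm j)"
        by (intro sum_mono) auto
      then show ?thesis using beta_sum by simp
    qed
  qed (use eta in auto)
  finally show ?thesis by simp
qed

lemma exc_avoid:
  assumes L: "1 \<le> L"
  shows "measure M (G (a + L) (\<lambda>k. if k < a then NZ else Cx a k)) \<le> (1 - \<eta>) ^ ((L - 1) div N) * measure M (G a (C0 a))"
proof -
  define C where "C = (\<lambda>k. if k < a then NZ else Cx a k)"
  define w where "w = vg d Pm bm C a"
  have w: "\<And>i. i < d \<Longrightarrow> 0 \<le> w i" unfolding w_def by (intro vg_nonneg) auto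
  have w0: "\<And>i. i \<noteq> 0 \<Longrightarrow> w i = 0" unfolding w_def by (cases a) (auto simp: C_def Cx_def)
  define w1 where "w1 = vg d Pm w Ctab 1"
  have w1: "\<And>i. i < d \<Longrightarrow> 0 \<le> w1 i" unfolding w1_def by (intro vg_nonneg w)
  have w10: "w1 0 = 0" unfolding w1_def by (simp add: Ctab_def NZ_def)
  have "measure M (G (a + L) C) = (\<Sum>j<d. vg d Pm bm C (a + L) j)" by (rule G_total)
  also have "\<dots> = (\<Sum>j<d. vg d Pm w Ctab L j)"
  proof (intro sum.cong refl)
    fix j
    have "(\<lambda>k. if k = 0 then UNIV else C (a + k)) = Ctab"
      by (auto simp: C_def Cx_def Ctab_def fun_eq_iff)
    then show "vg d Pm bm C (a + L) j = vg d Pm w Ctab L j"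
      unfolding w_def by (subst vg_restart) simp
  qed
  also have "\<dots> = (\<Sum>j<d. vg d Pm w1 Ctab (L - 1) j)"
  proof (intro sum.cong refl)
    fix j
    have "vg d Pm w Ctab (1 + (L - 1)) j = vg d Pm w1 Ctab (L - 1) j"
      unfolding w1_def by (subst vg_restart) (simp add: Ctab_restart)
    then show "vg d Pm w Ctab L j = vg d Pm w1 Ctab (L - 1) j" using L by simp
  qed
  also have "\<dots> \<le> (1 - \<eta>) ^ ((L - 1) div N) * (\<Sum>j<d. w1 j)" by (rule geo[where v=w1, OF w1 w10])
  also have "\<dots> \<le> (1 - \<eta>) ^ ((L - 1) div N) * (\<Sum>j<d. w j)"
    using eta unfolding w1_def by (intro mult_left_mono vg_sum_le_v w) auto
  also have "(\<Sum>j<d. w j) = measure M (G a (C0 a))"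
    unfolding w_def G_total by (intro sum.cong refl vg_cong_C) (auto simp: C_def Cx_def C0_def)
  finally show ?thesis unfolding C_def .
qed

end

context mapl
begin

lemma G_bound:
  assumes F: "nnd F" and B: "0 \<le> B" "B \<le> 1" and lo: "lo \<le> n"
    and dom: "\<And>p i t. p \<in> Paths n C \<Longrightarrow> i \<in> {lo..n} \<Longrightarrow>
              measure (nu \<beta> H p i) {t<..} \<le> Phi F B k (t - x0) * measure (nu \<beta> H p i) UNIV"
  shows "measure M (G n C \<inter> {\<omega>\<in>space M. x < (\<Sum>i\<in>{lo..n}. X i \<omega>)})
        \<le> measure M (G n C) * Phi F B (k * (n - lo + 1)) (x - real (n - lo + 1) * x0)"
proof -
  have S: "{\<omega>\<in>space M. x < (\<Sum>i\<in>{lo..n}. X i \<omega>)} \<in> sets M" by measurable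
  have "measure M (G n C \<inter> {\<omega>\<in>space M. x < (\<Sum>i\<in>{lo..n}. X i \<omega>)})
      = (\<Sum>p\<in>Paths n C. measure M (Ev n p \<inter> {\<omega>\<in>space M. x < (\<Sum>i\<in>{lo..n}. X i \<omega>)}))"
    by (rule G_split[OF S])
  also have "\<dots> \<le> (\<Sum>p\<in>Paths n C. wt \<beta> H n p * Phi F B (k * (n - lo + 1)) (x - real (n - lo + 1) * x0))"
  proof (intro sum_mono)
    fix p assume p: "p \<in> Paths n C"
    have "Ev n p \<inter> {\<omega>\<in>space M. x < (\<Sum>i\<in>{lo..n}. X i \<omega>)} = {\<omega>\<in>Ev n p. x < (\<Sum>i\<in>{lo..n}. X i \<omega>)}"
      unfolding Ev_def by auto
    then show "measure M (Ev n p \<inter> {\<omega>\<in>space M. x < (\<Sum>i\<in>{lo..n}. X i \<omega>)}) \<le> wt \<beta> H n p * Phi F B (k * (n - lo + 1)) (x - real (n - lo + 1) * x0)"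
      using path_bound[OF Paths_d[OF p] lo F B dom[OF p]] lo by (simp add: of_nat_diff ac_simps)
  qed
  also have "\<dots> = (\<Sum>p\<in>Paths n C. wt \<beta> H n p) * Phi F B (k * (n - lo + 1)) (x - real (n - lo + 1) * x0)"
    by (simp add: sum_distrib_right)
  also have "(\<Sum>p\<in>Paths n C. wt \<beta> H n p) = measure M (G n C)"
  proof -
    have "measure M (G n C \<inter> space M) = (\<Sum>p\<in>Paths n C. measure M (Ev n p \<inter> space M))"
      by (rule G_split) simp
    moreover have "Ev n p \<inter> space M = Ev n p" for p unfolding Ev_def by auto
    moreover have "G n C \<inter> space M = G n C" unfolding G_def by auto
    ultimately show ?thesis by (simp add: prob_Ev Paths_d)
  qed
  finally show ?thesis .
qed

lemma sum_split: "a \<le> n \<Longrightarrow> (\<Sum>i\<le>n. f i) = (\<Sum>i\<le>a. f i) + (\<Sum>i\<in>{Suc a..n}. f i :: real)"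
proof -
  assume "a \<le> n"
  then have "{..n} = {..a} \<union> {Suc a..n}" by auto
  then show ?thesis by (simp add: sum.union_disjoint)
qed

definition C1 :: "nat \<Rightarrow> nat \<Rightarrow> nat \<Rightarrow> nat set" where
  "C1 a l k = (if k < a then NZ else if k = a then {0} else if k < a + l then NZ else {0})"

lemma tau_facts:
  assumes w: "\<omega> \<in> space M" and m: "m1 < m2" "J m1 \<omega> = 0" "J m2 \<omega> = 0"
  obtains a l where "1 \<le> l" "\<omega> \<in> G (a + l) (C1 a l)" "tau0 J \<omega> = a" "tau1 J \<omega> = a + l"
proof -
  define a where "a = tau0 J \<omega>"
  have ex0: "\<exists>n. J n \<omega> = 0" using m by auto
  have Ja: "J a \<omega> = 0" unfolding a_def tau0_def by (rule LeastI_ex[OF ex0])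
  have lt: "k < a \<Longrightarrow> J k \<omega> \<noteq> 0" for k unfolding a_def tau0_def by (rule not_less_Least)
  have am: "a \<le> m1" unfolding a_def tau0_def by (rule Least_le) (use m in auto)
  define b where "b = tau1 J \<omega>"
  have ex1: "\<exists>n. a < n \<and> J n \<omega> = 0" using m am by (intro exI[of _ m2]) auto
  have Jb: "a < b \<and> J b \<omega> = 0" unfolding b_def tau1_def a_def[symmetric] by (rule LeastI_ex[OF ex1])
  have lt1: "a < k \<Longrightarrow> k < b \<Longrightarrow> J k \<omega> \<noteq> 0" for k
    using not_less_Least[of k "\<lambda>n. a < n \<and> J n \<omega> = 0"] unfolding b_def tau1_def a_def[symmetric] by auto
  show ?thesis
  proof (rule that[of "b - a" a])
    show "1 \<le> b - a" using Jb by arith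
    show "\<omega> \<in> G (a + (b - a)) (C1 a (b - a))"
      unfolding G_def C1_def NZ_def using w Ja Jb lt lt1 by auto
    show "tau0 J \<omega> = a" by (simp add: a_def)
    show "tau1 J \<omega> = a + (b - a)" using Jb by (simp add: b_def)
  qed
qed

lemma tau0_facts:
  assumes w: "\<omega> \<in> space M" and m: "J m \<omega> = 0"
  shows "\<omega> \<in> G (tau0 J \<omega>) (C0 (tau0 J \<omega>))"
proof -
  define a where "a = tau0 J \<omega>"
  have ex0: "\<exists>n. J n \<omega> = 0" using m by auto
  have Ja: "J a \<omega> = 0" unfolding a_def tau0_def by (rule LeastI_ex[OF ex0])
  have lt: "k < a \<Longrightarrow> J k \<omega> \<noteq> 0" for k unfolding a_def tau0_def by (rule not_less_Least)
  show ?thesis unfolding a_def[symmetric] G_def C0_def NZ_def using w Ja lt by auto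
qed

lemma G_tau0: "\<omega> \<in> G a (C0 a) \<Longrightarrow> tau0 J \<omega> = a"
proof -
  assume w: "\<omega> \<in> G a (C0 a)"
  have h: "\<And>k. k \<le> a \<Longrightarrow> J k \<omega> \<in> C0 a k" using w by (simp add: G_def)
  have Ja: "J a \<omega> = 0" using h[of a] by (simp add: C0_def)
  have "a \<le> y" if "J y \<omega> = 0" for y
  proof (rule ccontr)
    assume "\<not> a \<le> y"
    then have "y < a" by simp
    with h[of y] that show False by (simp add: C0_def NZ_def)
  qed
  then show ?thesis unfolding tau0_def by (intro Least_equality Ja)
qed

lemma G_tau1: "1 \<le> l \<Longrightarrow> \<omega> \<in> G (a + l) (C1 a l) \<Longrightarrow> tau0 J \<omega> = a \<and> tau1 J \<omega> = a + l"
proof -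
  assume l: "1 \<le> l" and w: "\<omega> \<in> G (a + l) (C1 a l)"
  have h: "\<And>k. k \<le> a + l \<Longrightarrow> J k \<omega> \<in> C1 a l k" using w by (simp add: G_def)
  have Ja: "J a \<omega> = 0" using h[of a] by (simp add: C1_def)
  have "a \<le> y" if "J y \<omega> = 0" for y
  proof (rule ccontr)
    assume "\<not> a \<le> y"
    then have "y < a" by simp
    with h[of y] that show False by (simp add: C1_def NZ_def)
  qed
  then have t0: "tau0 J \<omega> = a" unfolding tau0_def by (intro Least_equality Ja)
  have Jb: "a < a + l \<and> J (a + l) \<omega> = 0" using h[of "a + l"] l by (simp add: C1_def)
  have "a + l \<le> y" if "a < y \<and> J y \<omega> = 0" for y
  proof (rule ccontr)
    assume "\<not> a + l \<le> y"
    then have "y < a + l" by simp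
    with h[of y] that show False by (simp add: C1_def NZ_def)
  qed
  then have "tau1 J \<omega> = a + l" unfolding tau1_def t0 by (intro Least_equality Jb)
  with t0 show ?thesis by simp
qed

definition Zset :: "'a set" where
  "Zset = {\<omega>\<in>space M. \<not> (\<exists>m1 m2. m1 < m2 \<and> J m1 \<omega> = 0 \<and> J m2 \<omega> = 0)}"

lemma Zset_sets[measurable]: "Zset \<in> sets M"
proof -
  have "Zset = space M - (\<Union>m1. \<Union>m2. if m1 < m2 then {\<omega>\<in>space M. J m1 \<omega> = 0} \<inter> {\<omega>\<in>space M. J m2 \<omega> = 0} else {})"
    unfolding Zset_def by (auto split: if_splits) (metis less_irrefl)
  also have "\<dots> \<in> sets M"
    by (intro sets.Diff sets.top sets.countable_UN) (auto intro: sets.Int)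
  finally show ?thesis .
qed

end

context mapst
begin

lemma C0_disj: "disjoint_family (\<lambda>a. G a (C0 a))"
  unfolding disjoint_family_on_def
proof (intro ballI impI)
  fix a b :: nat assume "a \<noteq> b"
  show "G a (C0 a) \<inter> G b (C0 b) = {}"
    using G_tau0[of _ a] G_tau0[of _ b] \<open>a \<noteq> b\<close> by auto
qed

lemma pi_sum: "(\<Sum>a. ennreal (measure M (G a (C0 a)))) \<le> 1"
proof -
  have "(\<Sum>a. ennreal (measure M (G a (C0 a)))) = (\<Sum>a. emeasure M (G a (C0 a)))"
    by (simp add: emeasure_eq_measure)
  also have "\<dots> = emeasure M (\<Union>a. G a (C0 a))"
    by (rule suminf_emeasure) (auto simp: C0_disj)
  also have "\<dots> \<le> 1" by (rule emeasure_le_1) 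
  finally show ?thesis .
qed

lemma pi_sum_fin: "(\<Sum>a\<le>L. measure M (G a (C0 a))) \<le> 1"
proof -
  have "(\<Sum>a\<le>L. measure M (G a (C0 a))) = measure M (\<Union>a\<in>{..L}. G a (C0 a))"
    by (rule finite_measure_finite_Union[symmetric]) (use C0_disj in \<open>auto simp: disjoint_family_on_def\<close>)
  also have "\<dots> \<le> 1" by simp
  finally show ?thesis .
qed

lemma Zset_sub: "Zset \<subseteq> G L (\<lambda>_. NZ) \<union> (\<Union>a\<in>{..L}. G (a + L) (\<lambda>k. if k < a then NZ else Cx a k))"
proof
  fix \<omega> assume w: "\<omega> \<in> Zset"
  then have ws: "\<omega> \<in> space M"
    unfolding Zset_def by auto
  have nz0: "\<not> (\<exists>m1 m2. m1 < m2 \<and> J m1 \<omega> = 0 \<and> J m2 \<omega> = 0)"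
    using w unfolding Zset_def by (rule CollectE) (rule conjunct2)
  have nz: "J m2 \<omega> \<noteq> 0" if "m1 < m2" "J m1 \<omega> = 0" for m1 m2
  proof
    assume "J m2 \<omega> = 0"
    with that have "\<exists>m1 m2. m1 < m2 \<and> J m1 \<omega> = 0 \<and> J m2 \<omega> = 0" by (intro exI conjI)
    with nz0 show False by contradiction
  qed
  show "\<omega> \<in> G L (\<lambda>_. NZ) \<union> (\<Union>a\<in>{..L}. G (a + L) (\<lambda>k. if k < a then NZ else Cx a k))"
  proof (cases "\<exists>m\<le>L. J m \<omega> = 0")
    case False
    then have "\<omega> \<in> G L (\<lambda>_. NZ)" using ws unfolding G_def NZ_def by auto
    then show ?thesis by simp
  next
    case True
    then obtain m where m: "m \<le> L" "J m \<omega> = 0" by auto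
    define a where "a = tau0 J \<omega>"
    have g: "\<omega> \<in> G a (C0 a)" unfolding a_def by (rule tau0_facts[OF ws m(2)])
    have "a \<le> m" unfolding a_def tau0_def by (rule Least_le) (rule m(2))
    have "\<omega> \<in> G (a + L) (\<lambda>k. if k < a then NZ else Cx a k)"
      unfolding G_def
    proof (intro CollectI conjI allI impI ws)
      fix k assume "k \<le> a + L"
      show "J k \<omega> \<in> (if k < a then NZ else Cx a k)"
      proof (cases "k \<le> a")
        case True then show ?thesis using g unfolding G_def C0_def Cx_def by auto
      next
        case False
        have "J a \<omega> = 0" using g unfolding G_def C0_def by auto
        then have "J k \<omega> \<noteq> 0" using nz[of a k] False by auto
        then show ?thesis using False by (simp add: Cx_def NZ_def)
      qed
    qed
    then show ?thesis using \<open>a \<le> m\<close> m(1) by auto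
  qed
qed

lemma Zset_null: "measure M Zset = 0"
proof -
  have bound: "measure M Zset \<le> 2 * (1 - \<eta>) ^ m" for m
  proof -
    define L where "L = m * N + 1"
    have L1: "1 \<le> L" unfolding L_def by simp
    have LN: "(L - 1) div N = m" "m \<le> L div N" unfolding L_def using N1
      by (auto simp: div_le_mono intro: order.trans[OF _ div_le_mono[of "m * N" "Suc (m * N)" N]])
    have q: "0 \<le> 1 - \<eta>" "1 - \<eta> \<le> 1" using eta by auto
    have "measure M Zset \<le> measure M (G L (\<lambda>_. NZ) \<union> (\<Union>a\<in>{..L}. G (a + L) (\<lambda>k. if k < a then NZ else Cx a k)))"
      by (intro finite_measure_mono Zset_sub) auto
    also have "\<dots> \<le> measure M (G L (\<lambda>_. NZ)) + measure M (\<Union>a\<in>{..L}. G (a + L) (\<lambda>k. if k < a then NZ else Cx a k))"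
      by (rule measure_subadditive) (auto simp: emeasure_finite)
    also have "measure M (\<Union>a\<in>{..L}. G (a + L) (\<lambda>k. if k < a then NZ else Cx a k))
        \<le> (\<Sum>a\<le>L. measure M (G (a + L) (\<lambda>k. if k < a then NZ else Cx a k)))"
      by (rule finite_measure_subadditive_finite) auto
    also have "\<dots> \<le> (\<Sum>a\<le>L. (1 - \<eta>) ^ ((L - 1) div N) * measure M (G a (C0 a)))"
      by (intro sum_mono exc_avoid L1)
    also have "\<dots> = (1 - \<eta>) ^ m * (\<Sum>a\<le>L. measure M (G a (C0 a)))"
      by (simp only: LN(1) sum_distrib_left)
    also have "\<dots> \<le> (1 - \<eta>) ^ m * 1" using q by (intro mult_left_mono pi_sum_fin) auto
    also have "measure M (G L (\<lambda>_. NZ)) \<le> (1 - \<eta>) ^ m"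
      using no_zero[of L] power_decreasing[OF LN(2) q] by linarith
    finally show ?thesis by simp
  qed
  show ?thesis
  proof (rule ccontr)
    assume "measure M Zset \<noteq> 0"
    then have pos: "0 < measure M Zset" using measure_nonneg[of M Zset] by linarith
    have "(\<lambda>m. (1 - \<eta>) ^ m) \<longlonglongrightarrow> 0" by (rule LIMSEQ_power_zero) (use eta in auto)
    then have "eventually (\<lambda>m. (1 - \<eta>) ^ m < measure M Zset / 2) sequentially"
      using pos by (intro order_tendstoD(2)) auto
    then obtain m where "(1 - \<eta>) ^ m < measure M Zset / 2"
      by (auto simp: eventually_sequentially)
    with bound[of m] show False by simp
  qed
qed

end

context mapst
begin

lemma E1_bound: "measure M (G (a + Suc l) (C1 a (Suc l))) \<le> (1 - \<eta>) ^ ((l - 1) div N) * measure M (G a (C0 a))"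
proof (cases l)
  case 0
  have "G (a + Suc l) (C1 a (Suc l)) \<subseteq> G a (C0 a)"
  proof
    fix \<omega> assume "\<omega> \<in> G (a + Suc l) (C1 a (Suc l))"
    then have h: "\<omega> \<in> space M" "\<And>k. k \<le> a + Suc l \<Longrightarrow> J k \<omega> \<in> C1 a (Suc l) k" by (auto simp: G_def)
    show "\<omega> \<in> G a (C0 a)" unfolding G_def
    proof (intro CollectI conjI allI impI h(1))
      fix k assume "k \<le> a" then show "J k \<omega> \<in> C0 a k" using h(2)[of k] by (auto simp: C1_def C0_def)
    qed
  qed
  then have "measure M (G (a + Suc l) (C1 a (Suc l))) \<le> measure M (G a (C0 a))"
    by (intro finite_measure_mono) auto
  then show ?thesis using 0 by simp
next
  case (Suc l')
  have "G (a + Suc l) (C1 a (Suc l)) \<subseteq> G (a + l) (\<lambda>k. if k < a then NZ else Cx a k)"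
  proof
    fix \<omega> assume "\<omega> \<in> G (a + Suc l) (C1 a (Suc l))"
    then have h: "\<omega> \<in> space M" "\<And>k. k \<le> a + Suc l \<Longrightarrow> J k \<omega> \<in> C1 a (Suc l) k" by (auto simp: G_def)
    show "\<omega> \<in> G (a + l) (\<lambda>k. if k < a then NZ else Cx a k)" unfolding G_def
    proof (intro CollectI conjI allI impI h(1))
      fix k assume "k \<le> a + l" then show "J k \<omega> \<in> (if k < a then NZ else Cx a k)"
        using h(2)[of k] by (auto simp: C1_def Cx_def split: if_splits)
    qed
  qed
  then have "measure M (G (a + Suc l) (C1 a (Suc l))) \<le> measure M (G (a + l) (\<lambda>k. if k < a then NZ else Cx a k))"
    by (intro finite_measure_mono) auto
  also have "\<dots> \<le> (1 - \<eta>) ^ ((l - 1) div N) * measure M (G a (C0 a))"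
    by (rule exc_avoid) (use Suc in auto)
  finally show ?thesis .
qed

lemma E0_bound: "measure M (G a (C0 a)) \<le> (1 - \<eta>) ^ ((a - 1) div N)"
proof (cases a)
  case 0 then show ?thesis by simp
next
  case (Suc a')
  have "G a (C0 a) \<subseteq> G a' (\<lambda>_. NZ)" unfolding G_def C0_def Suc by auto
  then have "measure M (G a (C0 a)) \<le> measure M (G a' (\<lambda>_. NZ))" by (intro finite_measure_mono) auto
  also have "\<dots> \<le> (1 - \<eta>) ^ (a' div N)" by (rule no_zero)
  finally show ?thesis using Suc by simp
qed

lemma DB1_bound:
  fixes g :: "nat \<Rightarrow> real"
  assumes g0: "\<And>l. 0 \<le> g l" and sg: "summable (\<lambda>l. (1 - \<eta>) ^ ((l - 1) div N) * g l)"
    and hyp: "\<And>a l. measure M (G (a + Suc l) (C1 a (Suc l)) \<inter> {\<omega>\<in>space M. x < (\<Sum>i\<in>{Suc a..a + Suc l}. X i \<omega>)})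
               \<le> measure M (G (a + Suc l) (C1 a (Suc l))) * g l"
  shows "measure M {\<omega>\<in>space M. x < DeltaB X J 1 \<omega>} \<le> (\<Sum>l. (1 - \<eta>) ^ ((l - 1) div N) * g l)"
proof -
  define th where "th l = (1 - \<eta>) ^ ((l - 1) div N) * g l" for l
  have th0: "0 \<le> th l" for l unfolding th_def using eta g0 by simp
  define V where "V a l = G (a + Suc l) (C1 a (Suc l)) \<inter> {\<omega>\<in>space M. x < (\<Sum>i\<in>{Suc a..a + Suc l}. X i \<omega>)}" for a l
  have V[measurable]: "V a l \<in> sets M" for a l unfolding V_def by measurable
  define A where "A = {\<omega>\<in>space M. x < DeltaB X J 1 \<omega>}"
  have sub: "A \<subseteq> Zset \<union> (\<Union>a. \<Union>l. V a l)"
  proof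
    fix \<omega> assume wA: "\<omega> \<in> A"
    then have ws: "\<omega> \<in> space M" unfolding A_def by auto
    show "\<omega> \<in> Zset \<union> (\<Union>a. \<Union>l. V a l)"
    proof (cases "\<omega> \<in> Zset")
      case True then show ?thesis by simp
    next
      case False
      then obtain m1 m2 where m: "m1 < m2" "J m1 \<omega> = 0" "J m2 \<omega> = 0"
        using ws unfolding Zset_def by auto
      obtain a l where al: "1 \<le> l" "\<omega> \<in> G (a + l) (C1 a l)" "tau0 J \<omega> = a" "tau1 J \<omega> = a + l"
        by (rule tau_facts[OF ws m])
      obtain l' where l': "l = Suc l'" using al(1) by (cases l) auto
      have "DeltaB X J 1 \<omega> = (\<Sum>i\<in>{Suc a..a + l}. X i \<omega>)"
        unfolding DeltaB_def partial_sum_def al(3,4) using sum_split[of a "a + l" "\<lambda>i. X i \<omega>"] by simp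
      then have "\<omega> \<in> V a l'" using wA al(2) unfolding V_def A_def l' by auto
      then show ?thesis by auto
    qed
  qed
  have Vb: "emeasure M (V a l) \<le> ennreal (measure M (G a (C0 a)) * th l)" for a l
  proof -
    have "measure M (V a l) \<le> measure M (G (a + Suc l) (C1 a (Suc l))) * g l" unfolding V_def by (rule hyp)
    also have "\<dots> \<le> ((1 - \<eta>) ^ ((l - 1) div N) * measure M (G a (C0 a))) * g l"
      by (intro mult_right_mono E1_bound g0)
    finally show ?thesis unfolding th_def by (simp add: emeasure_eq_measure mult_ac ennreal_leI)
  qed
  show ?thesis
  proof (cases "A \<in> sets M")
    case False
    then have "measure M A = 0" by (simp add: measure_notin_sets)
    then show ?thesis unfolding A_def[symmetric] using th0 sg by (simp add: suminf_nonneg th_def)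
  next
    case True
    have "emeasure M A \<le> emeasure M (Zset \<union> (\<Union>a. \<Union>l. V a l))"
      by (intro emeasure_mono sub) auto
    also have "\<dots> \<le> emeasure M Zset + emeasure M (\<Union>a. \<Union>l. V a l)"
      by (rule emeasure_subadditive) auto
    also have "emeasure M Zset = 0" using Zset_null by (simp add: emeasure_eq_measure)
    also have "emeasure M (\<Union>a. \<Union>l. V a l) \<le> (\<Sum>a. emeasure M (\<Union>l. V a l))"
      by (rule emeasure_subadditive_countably) auto
    also have "\<dots> \<le> (\<Sum>a. \<Sum>l. emeasure M (V a l))"
      by (intro suminf_le emeasure_subadditive_countably) auto
    also have "\<dots> \<le> (\<Sum>a. \<Sum>l. ennreal (measure M (G a (C0 a))) * ennreal (th l))"
      using Vb th0 by (intro suminf_le) (auto simp: ennreal_mult)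
    also have "\<dots> = (\<Sum>a. ennreal (measure M (G a (C0 a)))) * (\<Sum>l. ennreal (th l))"
      by simp
    also have "\<dots> \<le> 1 * (\<Sum>l. ennreal (th l))" by (intro mult_right_mono pi_sum) auto
    also have "(\<Sum>l. ennreal (th l)) = ennreal (\<Sum>l. th l)"
      by (rule suminf_ennreal2[OF th0]) (use sg in \<open>simp add: th_def\<close>)
    finally have "emeasure M A \<le> ennreal (\<Sum>l. th l)" by simp
    moreover have s0: "0 \<le> (\<Sum>l. th l)" using th0 sg by (intro suminf_nonneg) (auto simp: th_def)
    ultimately have "measure M A \<le> (\<Sum>l. th l)"
      by (simp add: emeasure_eq_measure ennreal_le_iff[OF s0])
    then show ?thesis unfolding A_def th_def .
  qed
qed

lemma DB0_bound:
  fixes g :: "nat \<Rightarrow> real"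
  assumes g0: "\<And>l. 0 \<le> g l" and sg: "summable (\<lambda>a. (1 - \<eta>) ^ ((a - 1) div N) * g a)"
    and hyp: "\<And>a. measure M (G a (C0 a) \<inter> {\<omega>\<in>space M. x < (\<Sum>i\<in>{0..a}. X i \<omega>)})
               \<le> measure M (G a (C0 a)) * g a"
  shows "measure M {\<omega>\<in>space M. x < DeltaB X J 0 \<omega>} \<le> (\<Sum>a. (1 - \<eta>) ^ ((a - 1) div N) * g a)"
proof -
  define th where "th a = (1 - \<eta>) ^ ((a - 1) div N) * g a" for a
  have th0: "0 \<le> th l" for l unfolding th_def using eta g0 by simp
  define V where "V a = G a (C0 a) \<inter> {\<omega>\<in>space M. x < (\<Sum>i\<in>{0..a}. X i \<omega>)}" for a
  have V[measurable]: "V a \<in> sets M" for a unfolding V_def by measurable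
  define A where "A = {\<omega>\<in>space M. x < DeltaB X J 0 \<omega>}"
  have sub: "A \<subseteq> Zset \<union> (\<Union>a. V a)"
  proof
    fix \<omega> assume wA: "\<omega> \<in> A"
    then have ws: "\<omega> \<in> space M" unfolding A_def by auto
    show "\<omega> \<in> Zset \<union> (\<Union>a. V a)"
    proof (cases "\<omega> \<in> Zset")
      case True then show ?thesis by simp
    next
      case False
      then obtain m1 m2 where m: "m1 < m2" "J m1 \<omega> = 0" "J m2 \<omega> = 0"
        using ws unfolding Zset_def by auto
      have g: "\<omega> \<in> G (tau0 J \<omega>) (C0 (tau0 J \<omega>))" by (rule tau0_facts[OF ws m(2)])
      have "DeltaB X J 0 \<omega> = (\<Sum>i\<in>{0..tau0 J \<omega>}. X i \<omega>)"
        unfolding DeltaB_def partial_sum_def by (simp add: atLeast0AtMost)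
      then have "\<omega> \<in> V (tau0 J \<omega>)" using wA g unfolding V_def A_def by auto
      then show ?thesis by auto
    qed
  qed
  have Vb: "emeasure M (V a) \<le> ennreal (th a)" for a
  proof -
    have "measure M (V a) \<le> measure M (G a (C0 a)) * g a" unfolding V_def by (rule hyp)
    also have "\<dots> \<le> (1 - \<eta>) ^ ((a - 1) div N) * g a"
      by (intro mult_right_mono E0_bound g0)
    finally show ?thesis unfolding th_def by (simp add: emeasure_eq_measure ennreal_leI)
  qed
  show ?thesis
  proof (cases "A \<in> sets M")
    case False
    then have "measure M A = 0" by (simp add: measure_notin_sets)
    then show ?thesis unfolding A_def[symmetric] using th0 sg by (simp add: suminf_nonneg th_def)
  next
    case True
    have "emeasure M A \<le> emeasure M (Zset \<union> (\<Union>a. V a))"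
      by (intro emeasure_mono sub) auto
    also have "\<dots> \<le> emeasure M Zset + emeasure M (\<Union>a. V a)"
      by (rule emeasure_subadditive) auto
    also have "emeasure M Zset = 0" using Zset_null by (simp add: emeasure_eq_measure)
    also have "emeasure M (\<Union>a. V a) \<le> (\<Sum>a. emeasure M (V a))"
      by (rule emeasure_subadditive_countably) auto
    also have "\<dots> \<le> (\<Sum>a. ennreal (th a))"
      using Vb by (intro suminf_le) auto
    also have "(\<Sum>a. ennreal (th a)) = ennreal (\<Sum>a. th a)"
      by (rule suminf_ennreal2[OF th0]) (use sg in \<open>simp add: th_def\<close>)
    finally have "emeasure M A \<le> ennreal (\<Sum>l. th l)" by simp
    moreover have s0: "0 \<le> (\<Sum>l. th l)" using th0 sg by (intro suminf_nonneg) (auto simp: th_def)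
    ultimately have "measure M A \<le> (\<Sum>l. th l)"
      by (simp add: emeasure_eq_measure ennreal_le_iff[OF s0])
    then show ?thesis unfolding A_def th_def .
  qed
qed

end

context subexp
begin

lemma Phi_neg: "0 \<le> B \<Longrightarrow> B \<le> 1 \<Longrightarrow> y < 0 \<Longrightarrow> Phi F B n y = 1"
  using good_Phi[of B n] by (simp add: good_def)

lemma Phi_nonneg: "0 \<le> B \<Longrightarrow> B \<le> 1 \<Longrightarrow> 0 \<le> Phi F B n y"
  using good_Phi[of B n] by (simp add: good_def good0_def)

lemma Phi_le1: "0 \<le> B \<Longrightarrow> B \<le> 1 \<Longrightarrow> Phi F B n y \<le> 1"
  using good_Phi[of B n] by (simp add: good_def good0_def)

lemma Phi_antimono: "0 \<le> B \<Longrightarrow> B \<le> 1 \<Longrightarrow> y \<le> y' \<Longrightarrow> Phi F B n y' \<le> Phi F B n y"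
  using good_Phi[of B n] by (simp add: good_def good0_def antimono_def)

lemma dom_gen:
  assumes fin: "finite_measure \<nu>" and sets: "sets \<nu> = sets borel" and mm: "0 < mmin"
    and mass: "measure \<nu> UNIV = 0 \<or> mmin \<le> measure \<nu> UNIV"
    and tl: "\<And>t. x1 \<le> t \<Longrightarrow> measure \<nu> {t<..} \<le> b * Fb F t" and b: "0 \<le> b"
    and x0: "x1 \<le> x0" "0 \<le> x0" and B: "0 \<le> B" "B \<le> 1"
    and ph: "\<And>s. 0 \<le> s \<Longrightarrow> (b / mmin) * Fb F (s + x0) \<le> Phi F B k s"
  shows "measure \<nu> {t<..} \<le> Phi F B k (t - x0) * measure \<nu> UNIV"
proof -
  interpret nu: finite_measure \<nu> by (rule fin)
  have le: "measure \<nu> {t<..} \<le> measure \<nu> UNIV"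
  proof (cases "{t<..} \<in> sets \<nu>")
    case True
    have sp: "space \<nu> = UNIV" using sets_eq_imp_space_eq[OF sets] by simp
    show ?thesis using nu.finite_measure_mono[of "{t<..}" "space \<nu>"] sets.top[of \<nu>] sp by simp
  next
    case False then show ?thesis by (simp add: measure_notin_sets)
  qed
  show ?thesis
  proof (cases "measure \<nu> UNIV = 0")
    case True then show ?thesis using le by simp
  next
    case False
    with mass have m: "mmin \<le> measure \<nu> UNIV" by simp
    show ?thesis
    proof (cases "t < x0")
      case True then show ?thesis using le Phi_neg[OF B, of "t - x0" k] by simp
    next
      case False
      have "measure \<nu> {t<..} \<le> b * Fb F t" using tl[of t] False x0 by simp
      also have "\<dots> = mmin * ((b / mmin) * Fb F ((t - x0) + x0))" using mm by simp
      also have "\<dots> \<le> mmin * Phi F B k (t - x0)" using ph[of "t - x0"] False mm by (intro mult_left_mono) auto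
      also have "\<dots> \<le> measure \<nu> UNIV * Phi F B k (t - x0)"
        using m Phi_nonneg[OF B] by (intro mult_right_mono) auto
      finally show ?thesis by (simp add: mult.commute)
    qed
  qed
qed

lemma ph_fine:
  assumes B: "0 \<le> B" "B \<le> 1" and x0: "0 \<le> x0" and s: "0 \<le> s"
  shows "B * Fb F (s + x0) \<le> Phi F B 1 s"
proof -
  have "Phi F B 1 s = (1 - B) * chi s + B * Fb F s"
    by (simp add: Phi_def Iop_def int_chi)
  also have "\<dots> = B * Fb F s" using s by (simp add: chi_def)
  finally show ?thesis using Fb_antimono[of s "s + x0"] x0 B by (simp add: mult_left_mono)
qed

lemma ph_crude:
  assumes b: "0 \<le> b'"
  obtains k s0 where "1 \<le> k" "0 \<le> s0" "\<And>x0 s. s0 \<le> x0 \<Longrightarrow> 0 \<le> s \<Longrightarrow> b' * Fb F (s + x0) \<le> Phi F 1 k s"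
proof -
  define k where "k = nat \<lceil>2 * b'\<rceil> + 1"
  have k1: "1 \<le> k" unfolding k_def by simp
  have kb: "2 * b' \<le> real k" unfolding k_def by linarith
  have "eventually (\<lambda>x. Fb F x < 1 / (2 * real k)) at_top"
    using order_tendstoD(2)[OF Fb_lim, of "1 / (2 * real k)"] k1 by simp
  then obtain s1 where s1: "\<And>x. s1 \<le> x \<Longrightarrow> Fb F x < 1 / (2 * real k)" unfolding eventually_at_top_linorder by auto
  define s0 where "s0 = max s1 0"
  have s0: "0 \<le> s0" "k * Fb F s0 \<le> 1/2"
  proof -
    show "0 \<le> s0" unfolding s0_def by simp
    have "Fb F s0 < 1 / (2 * real k)" using s1[of s0] unfolding s0_def by simp
    then show "k * Fb F s0 \<le> 1/2" using k1 by (simp add: field_simps)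
  qed
  show ?thesis
  proof (rule that[OF k1 s0(1)])
    fix x0 s :: real assume x0: "s0 \<le> x0" and s: "0 \<le> s"
    show "b' * Fb F (s + x0) \<le> Phi F 1 k s"
    proof (cases "s0 \<le> s")
      case True
      have "k * Fb F s \<le> k * Fb F s0" using Fb_antimono[OF True] by (intro mult_left_mono) auto
      then have kf: "k * Fb F s \<le> 1/2" using s0(2) by linarith
      have "b' * Fb F (s + x0) \<le> b' * Fb F s"
        using Fb_antimono[of s "s + x0"] x0 s0 b by (intro mult_left_mono) auto
      also have "\<dots> \<le> k * Fb F s / 2" using mult_right_mono[OF kb Fb_nonneg[of s]] by (simp add: mult_ac)
      also have "\<dots> \<le> Phi F 1 k s" by (rule Phi1_lower_half[OF s kf])
      finally show ?thesis .
    next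
      case False
      have "b' * Fb F (s + x0) \<le> b' * Fb F s0"
        using Fb_antimono[of s0 "s + x0"] x0 s b by (intro mult_left_mono) auto
      also have "\<dots> \<le> k * Fb F s0 / 2" using mult_right_mono[OF kb Fb_nonneg[of s0]] by (simp add: mult_ac)
      also have "\<dots> \<le> Phi F 1 k s0" by (rule Phi1_lower_half[OF s0(1) s0(2)])
      also have "\<dots> \<le> Phi F 1 k s" using False by (intro Phi_antimono) auto
      finally show ?thesis .
    qed
  qed
qed

lemma Phi_unif:
  assumes B: "0 \<le> B" "B \<le> 1" and e: "0 < e"
    and x1: "0 \<le> x1" "\<And>x. x1 \<le> x \<Longrightarrow> (\<integral>y. Fb F (x - y) \<partial>F) \<le> (2 + e) * Fb F x"
  shows "Phi F B n y \<le> (1 + (1 / Fb F x1) / e) * (1 + e) ^ (2 * n) * Fb F y"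
proof -
  define K where "K = 1 / Fb F x1"
  have K: "0 \<le> K" unfolding K_def using Fb_pos[of x1] by simp
  have p1: "1 \<le> (1 + e) ^ (2 * n)" using e by (intro one_le_power) auto
  have c0: "1 \<le> (1 + K / e) * (1 + e) ^ (2 * n)"
  proof -
    have "1 * 1 \<le> (1 + K / e) * (1 + e) ^ (2 * n)" by (rule mult_mono) (use p1 K e in auto)
    then show ?thesis by simp
  qed
  have "Phi F B n y \<le> (1 + K / e) * (1 + e) ^ (2 * n) * Fb F y"
  proof (cases "y < 0")
    case True
    then show ?thesis using Phi_le1[OF B, of n y] Fb_neg[OF True] c0 by simp
  next
    case False
    have "Phi F B n y \<le> K * B * n * (1 + e) ^ n * Fb F y" unfolding K_def
      by (rule Kesten[OF B e x1]) (use False in auto)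
    also have "\<dots> \<le> K * 1 * ((1 + e) ^ n / e) * (1 + e) ^ n * Fb F y"
    proof -
      have "1 + real n * e \<le> (1 + e) ^ n" using Bernoulli_inequality[of e n] e by simp
      then have "real n \<le> (1 + e) ^ n / e" using e by (simp add: field_simps)
      then show ?thesis using K B e Fb_nonneg[of y]
        by (intro mult_right_mono mult_mono) auto
    qed
    also have "\<dots> = (K / e) * (1 + e) ^ (2 * n) * Fb F y" by (simp add: power_mult power2_eq_square power_add[symmetric] mult_2)
    also have "\<dots> \<le> (1 + K / e) * (1 + e) ^ (2 * n) * Fb F y"
      using Fb_nonneg[of y] p1 by (intro mult_right_mono) auto
    finally show ?thesis .
  qed
  then show ?thesis by (simp add: K_def)
qed

end

lemma th_bound:
  fixes q :: real
  assumes q: "0 < q" "q \<le> 1" and N: "1 \<le> N"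
  shows "q ^ ((l - 1) div N) \<le> root N q ^ l / q"
proof -
  define Q where "Q = root N q"
  have Q: "0 < Q" "Q \<le> 1" unfolding Q_def using q N real_root_le_iff[of N q 1] by (auto simp: real_root_gt_zero)
  have QN: "Q ^ N = q" unfolding Q_def using q N by (simp add: real_root_pow_pos2)
  define m where "m = (l - 1) div N"
  have "l \<le> N * m + N"
  proof -
    have r: "(l - 1) mod N < N" using N by simp
    have e: "l - 1 = N * m + (l - 1) mod N" unfolding m_def by simp
    have "l - 1 < N * (m + 1)" using r e by (simp add: algebra_simps)
    then show ?thesis by simp
  qed
  then have "Q ^ (N * m + N) \<le> Q ^ l" using Q by (intro power_decreasing) auto
  also have "Q ^ (N * m + N) = q ^ m * q" by (simp add: power_add power_mult QN)
  finally show ?thesis unfolding m_def[symmetric] Q_def[symmetric] using q by (simp add: field_simps)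
qed

lemma geom_series_bound:
  fixes f :: "nat \<Rightarrow> real"
  assumes f0: "\<And>l. 0 \<le> f l" and fb: "\<And>l. f l \<le> A * r ^ l" and r: "0 \<le> r" "r < 1"
  shows "summable f" "(\<Sum>l. f l) \<le> A / (1 - r)"
proof -
  have sg: "summable (\<lambda>l. A * r ^ l)" using r by (intro summable_mult summable_geometric) auto
  show sf: "summable f" by (rule summable_comparison_test[OF _ sg]) (use f0 fb in auto)
  have "(\<Sum>l. f l) \<le> (\<Sum>l. A * r ^ l)" by (rule suminf_le[OF fb sf sg])
  also have "\<dots> = A / (1 - r)" using r by (simp add: suminf_mult suminf_geometric)
  finally show "(\<Sum>l. f l) \<le> A / (1 - r)" .
qed

lemma small_e:
  fixes Q :: real and m :: nat
  assumes "0 < Q" "Q < 1"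
  obtains e where "0 < e" "Q * (1 + e) ^ m < 1"
proof -
  have "((\<lambda>e. (1 + e) ^ m) \<longlongrightarrow> (1 + 0) ^ m) (at_right (0::real))"
    by (intro tendsto_intros)
  then have "eventually (\<lambda>e. (1 + e) ^ m < 1 / Q) (at_right (0::real))"
    using assms by (intro order_tendstoD(2)) (auto simp: field_simps)
  moreover have "eventually (\<lambda>e. 0 < e) (at_right (0::real))" by (rule eventually_at_right_less)
  ultimately have "eventually (\<lambda>e. 0 < e \<and> (1 + e) ^ m < 1 / Q) (at_right (0::real))"
    by eventually_elim auto
  moreover have "at_right (0::real) \<noteq> bot" using trivial_limit_at_right_real by (simp add: trivial_limit_def)
  ultimately obtain e where "0 < e" "(1 + e) ^ m < 1 / Q"
    using eventually_happens' by blast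
  then show ?thesis using assms by (intro that[of e]) (auto simp: field_simps)
qed

locale fin = mapst M d \<beta> H X J N \<eta> + Fx: subexp F
  for M :: "'a measure" and d \<beta> H X J N \<eta> F +
  assumes eta_half: "\<eta> \<le> 1/2"
begin

definition domok :: "real \<Rightarrow> nat \<Rightarrow> real \<Rightarrow> bool" where
  "domok B k x0 \<longleftrightarrow> (\<forall>i<d. \<forall>t. measure (\<beta> i) {t<..} \<le> Phi F B k (t - x0) * measure (\<beta> i) UNIV)
      \<and> (\<forall>i<d. \<forall>j<d. \<forall>t. measure (H i j) {t<..} \<le> Phi F B k (t - x0) * measure (H i j) UNIV)"

lemma nnd_F: "nnd F" by (rule Fx.nnd_axioms)

lemma hyp1:
  fixes x x0 :: real
  assumes dk: "domok B k x0" and B: "0 \<le> B" "B \<le> 1"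
  shows "measure M (G (a + Suc l) (C1 a (Suc l)) \<inter> {\<omega>\<in>space M. x < (\<Sum>i\<in>{Suc a..a + Suc l}. X i \<omega>)})
          \<le> measure M (G (a + Suc l) (C1 a (Suc l))) * Phi F B (k * Suc l) (x - real (Suc l) * x0)"
proof -
  have "measure M (G (a + Suc l) (C1 a (Suc l)) \<inter> {\<omega>\<in>space M. x < (\<Sum>i\<in>{Suc a..a + Suc l}. X i \<omega>)})
      \<le> measure M (G (a + Suc l) (C1 a (Suc l))) * Phi F B (k * (a + Suc l - Suc a + 1)) (x - real (a + Suc l - Suc a + 1) * x0)"
  proof (rule G_bound[OF nnd_F B])
    fix p i t assume p: "p \<in> Paths (a + Suc l) (C1 a (Suc l))" and i: "i \<in> {Suc a..a + Suc l}"
    have "nu \<beta> H p i = H (p (i - 1)) (p i)" using i by (simp add: nu_def)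
    moreover have "p (i - 1) < d" "p i < d" using Paths_d[OF p] i by auto
    ultimately show "measure (nu \<beta> H p i) {t<..} \<le> Phi F B k (t - x0) * measure (nu \<beta> H p i) UNIV"
      using dk unfolding domok_def by auto
  qed simp
  then show ?thesis by simp
qed

lemma hyp0:
  fixes x x0 :: real
  assumes dk: "domok B k x0" and B: "0 \<le> B" "B \<le> 1"
  shows "measure M (G a (C0 a) \<inter> {\<omega>\<in>space M. x < (\<Sum>i\<in>{0..a}. X i \<omega>)})
          \<le> measure M (G a (C0 a)) * Phi F B (k * Suc a) (x - real (Suc a) * x0)"
proof -
  have "measure M (G a (C0 a) \<inter> {\<omega>\<in>space M. x < (\<Sum>i\<in>{0..a}. X i \<omega>)})
      \<le> measure M (G a (C0 a)) * Phi F B (k * (a - 0 + 1)) (x - real (a - 0 + 1) * x0)"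
  proof (rule G_bound[OF nnd_F B])
    fix p i t assume p: "p \<in> Paths a (C0 a)" and i: "i \<in> {0..a}"
    show "measure (nu \<beta> H p i) {t<..} \<le> Phi F B k (t - x0) * measure (nu \<beta> H p i) UNIV"
    proof (cases "i = 0")
      case True
      have "p 0 < d" using Paths_d[OF p] by auto
      then show ?thesis using True dk unfolding domok_def nu_def by auto
    next
      case False
      have "nu \<beta> H p i = H (p (i - 1)) (p i)" using False by (simp add: nu_def)
      moreover have "p (i - 1) < d" "p i < d" using Paths_d[OF p] i by auto
      ultimately show ?thesis using dk unfolding domok_def by auto
    qed
  qed simp
  then show ?thesis by simp
qed

end

context fin
begin

lemma q_facts: "1/2 \<le> 1 - \<eta>" "1 - \<eta> < 1" using eta eta_half by auto

lemma crude_terms: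
  assumes x0: "0 \<le> x0" and B: "0 \<le> B" "B \<le> 1"
  obtains A r where "0 \<le> A" "0 \<le> r" "r < 1"
    "\<And>x l. (1 - \<eta>) ^ ((l - 1) div N) * Phi F B (k * Suc l) (x - real (Suc l) * x0) \<le> A * r ^ l * Fb F x"
proof -
  define q where "q = 1 - \<eta>"
  have q: "0 < q" "q < 1" "q \<le> 1" using q_facts unfolding q_def by auto
  define Q where "Q = root N q"
  have Q: "0 < Q" "Q < 1" unfolding Q_def using q N1 real_root_less_iff[of N q 1] by (auto simp: real_root_gt_zero)
  obtain e where e: "0 < e" "Q * (1 + e) ^ (2 * k + 1) < 1" using small_e[OF Q] by blast
  obtain x1 where x1: "0 \<le> x1" "\<And>x. x1 \<le> x \<Longrightarrow> (\<integral>y. Fb F (x - y) \<partial>F) \<le> (2 + e) * Fb F x"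
    using Fx.K0'[OF e(1)] by blast
  define Kc where "Kc = 1 + (1 / Fb F x1) / e"
  have Kc: "0 \<le> Kc" unfolding Kc_def using Fx.Fb_pos[of x1] e by simp
  obtain x2 where x2: "\<And>x. x2 \<le> x \<Longrightarrow> Fb F (x - x0) \<le> (1 + e) * Fb F x"
    using Fx.long_tail[OF x0 e(1)] unfolding eventually_at_top_linorder by blast
  define K1 where "K1 = 1 / Fb F x2"
  have K1: "0 \<le> K1" unfolding K1_def using Fx.Fb_pos[of x2] by simp
  define \<rho> where "\<rho> = (1 + e) ^ (2 * k + 1)"
  have \<rho>: "1 \<le> \<rho>" unfolding \<rho>_def using e by (intro one_le_power) auto
  show ?thesis
  proof (rule that[of "Kc * K1 * \<rho> / q" "Q * \<rho>"])
    show "0 \<le> Kc * K1 * \<rho> / q" using Kc K1 \<rho> q by simp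
    show "0 \<le> Q * \<rho>" using Q \<rho> by simp
    show "Q * \<rho> < 1" using e(2) unfolding \<rho>_def .
    fix x l
    have th: "q ^ ((l - 1) div N) \<le> Q ^ l / q" unfolding Q_def by (rule th_bound[OF q(1,3) N1])
    have "Phi F B (k * Suc l) (x - real (Suc l) * x0) \<le> Kc * (1 + e) ^ (2 * (k * Suc l)) * Fb F (x - real (Suc l) * x0)"
      unfolding Kc_def by (rule Fx.Phi_unif[OF B e(1) x1])
    also have "\<dots> \<le> Kc * (1 + e) ^ (2 * (k * Suc l)) * (K1 * (1 + e) ^ Suc l * Fb F x)"
      unfolding K1_def using Kc e
      by (intro mult_left_mono Fx.shift_bound[OF x0 _ x2]) auto
    also have "\<dots> = Kc * K1 * \<rho> ^ Suc l * Fb F x"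
    proof -
      have ex: "2 * (k * Suc l) + Suc l = (2 * k + 1) * Suc l" by (simp add: algebra_simps)
      have pw: "(1 + e) ^ (2 * (k * Suc l)) * (1 + e) ^ Suc l = \<rho> ^ Suc l"
        unfolding \<rho>_def by (simp only: power_add[symmetric] power_mult[symmetric] ex)
      show ?thesis unfolding pw[symmetric] by (simp add: mult_ac)
    qed
    finally have g: "Phi F B (k * Suc l) (x - real (Suc l) * x0) \<le> Kc * K1 * \<rho> ^ Suc l * Fb F x" .
    have "q ^ ((l - 1) div N) * Phi F B (k * Suc l) (x - real (Suc l) * x0) \<le> (Q ^ l / q) * (Kc * K1 * \<rho> ^ Suc l * Fb F x)"
      using th g q Q by (intro mult_mono Fx.Phi_nonneg B) auto
    also have "\<dots> = Kc * K1 * \<rho> / q * (Q * \<rho>) ^ l * Fb F x"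
      by (simp add: power_mult_distrib algebra_simps)
    finally show "(1 - \<eta>) ^ ((l - 1) div N) * Phi F B (k * Suc l) (x - real (Suc l) * x0) \<le> Kc * K1 * \<rho> / q * (Q * \<rho>) ^ l * Fb F x"
      unfolding q_def .
  qed
qed

lemma total_bound:
  fixes g :: "nat \<Rightarrow> real" and x :: real
  assumes g0: "\<And>l. 0 \<le> g l" and A: "0 \<le> A" and r: "0 \<le> r" "r < 1"
    and gb: "\<And>l. (1 - \<eta>) ^ ((l - 1) div N) * g l \<le> A * r ^ l * Fb F x"
    and h1: "\<And>a l. measure M (G (a + Suc l) (C1 a (Suc l)) \<inter> {\<omega>\<in>space M. x < (\<Sum>i\<in>{Suc a..a + Suc l}. X i \<omega>)})
               \<le> measure M (G (a + Suc l) (C1 a (Suc l))) * g l"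
    and h0: "\<And>a. measure M (G a (C0 a) \<inter> {\<omega>\<in>space M. x < (\<Sum>i\<in>{0..a}. X i \<omega>)})
               \<le> measure M (G a (C0 a)) * g a"
  shows "measure M {\<omega>\<in>space M. x < DeltaB X J 1 \<omega>} \<le> (\<Sum>l. (1 - \<eta>) ^ ((l - 1) div N) * g l)"
    "measure M {\<omega>\<in>space M. x < DeltaB X J 0 \<omega>} \<le> (\<Sum>l. (1 - \<eta>) ^ ((l - 1) div N) * g l)"
    "summable (\<lambda>l. (1 - \<eta>) ^ ((l - 1) div N) * g l)"
proof -
  have f0: "0 \<le> (1 - \<eta>) ^ ((l - 1) div N) * g l" for l using g0 eta by simp
  have gb': "(1 - \<eta>) ^ ((l - 1) div N) * g l \<le> (A * Fb F x) * r ^ l" for l using gb[of l] by (simp add: mult_ac)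
  show sm: "summable (\<lambda>l. (1 - \<eta>) ^ ((l - 1) div N) * g l)" by (rule geom_series_bound(1)[OF f0 gb' r])
  show "measure M {\<omega>\<in>space M. x < DeltaB X J 1 \<omega>} \<le> (\<Sum>l. (1 - \<eta>) ^ ((l - 1) div N) * g l)"
    by (rule DB1_bound[OF g0 sm h1])
  show "measure M {\<omega>\<in>space M. x < DeltaB X J 0 \<omega>} \<le> (\<Sum>l. (1 - \<eta>) ^ ((l - 1) div N) * g l)"
    by (rule DB0_bound[OF g0 sm h0])
qed

end

context fin
begin

lemma crude_Cst:
  assumes dk: "domok 1 k x0" and x0: "0 \<le> x0"
  obtains Cst where "0 \<le> Cst" "\<And>x m. m \<in> {0, 1} \<Longrightarrow> measure M {\<omega>\<in>space M. x < DeltaB X J m \<omega>} \<le> Cst * Fb F x"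
proof -
  obtain A r where Ar: "0 \<le> A" "0 \<le> r" "r < 1"
    "\<And>x l. (1 - \<eta>) ^ ((l - 1) div N) * Phi F 1 (k * Suc l) (x - real (Suc l) * x0) \<le> A * r ^ l * Fb F x"
    using crude_terms[OF x0, of 1 k] by auto
  show ?thesis
  proof (rule that[of "A / (1 - r)"])
    show "0 \<le> A / (1 - r)" using Ar by simp
    fix x :: real and m :: nat assume m: "m \<in> {0, 1}"
    define g where "g l = Phi F 1 (k * Suc l) (x - real (Suc l) * x0)" for l
    have g0: "0 \<le> g l" for l unfolding g_def by (rule Fx.Phi_nonneg) auto
    have gb: "(1 - \<eta>) ^ ((l - 1) div N) * g l \<le> A * r ^ l * Fb F x" for l
      unfolding g_def by (rule Ar(4))
    have h1: "measure M (G (a + Suc l) (C1 a (Suc l)) \<inter> {\<omega>\<in>space M. x < (\<Sum>i\<in>{Suc a..a + Suc l}. X i \<omega>)})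
               \<le> measure M (G (a + Suc l) (C1 a (Suc l))) * g l" for a l
      unfolding g_def by (rule hyp1[OF dk]) simp_all
    have h0: "measure M (G a (C0 a) \<inter> {\<omega>\<in>space M. x < (\<Sum>i\<in>{0..a}. X i \<omega>)})
               \<le> measure M (G a (C0 a)) * g a" for a
      unfolding g_def by (rule hyp0[OF dk]) simp_all
    note tb = total_bound[OF g0 Ar(1) Ar(2) Ar(3) gb h1 h0]
    have f0: "0 \<le> (1 - \<eta>) ^ ((l - 1) div N) * g l" for l using g0 eta by simp
    have fb: "(1 - \<eta>) ^ ((l - 1) div N) * g l \<le> (A * Fb F x) * r ^ l" for l
      using gb[of l] by (simp add: mult_ac)
    have "(\<Sum>l. (1 - \<eta>) ^ ((l - 1) div N) * g l) \<le> (A * Fb F x) / (1 - r)"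
      by (rule geom_series_bound(2)[OF f0 fb Ar(2) Ar(3)])
    then have "(\<Sum>l. (1 - \<eta>) ^ ((l - 1) div N) * g l) \<le> A / (1 - r) * Fb F x" by simp
    then show "measure M {\<omega>\<in>space M. x < DeltaB X J m \<omega>} \<le> A / (1 - r) * Fb F x"
      using tb m by auto
  qed
qed

end

context fin
begin

lemma fine_eps:
  assumes dk: "domok 1 k x0" and x0: "0 \<le> x0"
    and fine: "\<And>\<delta>. 0 < \<delta> \<Longrightarrow> \<exists>B' x0'. 0 \<le> x0' \<and> 0 \<le> B' \<and> B' \<le> \<delta> \<and> B' \<le> 1 \<and> domok B' 1 x0'"
    and eps: "0 < \<epsilon>"
  shows "eventually (\<lambda>x. \<forall>m\<in>{0, 1}. measure M {\<omega>\<in>space M. x < DeltaB X J m \<omega>} \<le> \<epsilon> * Fb F x) at_top"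
proof -
  obtain A r where Ar: "0 \<le> A" "0 \<le> r" "r < 1"
    "\<And>x l. (1 - \<eta>) ^ ((l - 1) div N) * Phi F 1 (k * Suc l) (x - real (Suc l) * x0) \<le> A * r ^ l * Fb F x"
    using crude_terms[OF x0, of 1 k] by auto
  have "(\<lambda>L. A * r ^ L / (1 - r)) \<longlonglongrightarrow> A * 0 / (1 - r)"
    using Ar by (intro tendsto_intros LIMSEQ_power_zero) auto
  then have "eventually (\<lambda>L. A * r ^ L / (1 - r) < \<epsilon> / 2) sequentially"
    using eps by (intro order_tendstoD(2)) auto
  then obtain L where L: "A * r ^ L / (1 - r) < \<epsilon> / 2" by (auto simp: eventually_sequentially)
  obtain x1 where x1: "0 \<le> x1" "\<And>x. x1 \<le> x \<Longrightarrow> (\<integral>y. Fb F (x - y) \<partial>F) \<le> (2 + 1) * Fb F x"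
    using Fx.K0'[of 1] by auto
  define KB where "KB = 1 / Fb F x1"
  have KB: "0 < KB" unfolding KB_def using Fx.Fb_pos[of x1] by simp
  define \<delta> where "\<delta> = \<epsilon> / (4 * KB * (real L + 1) ^ 2 * 2 ^ L)"
  have \<delta>: "0 < \<delta>" unfolding \<delta>_def using eps KB by simp
  obtain B' x0' where B': "0 \<le> x0'" "0 \<le> B'" "B' \<le> \<delta>" "B' \<le> 1" "domok B' 1 x0'"
    using fine[OF \<delta>] by blast
  have ev1: "eventually (\<lambda>x. Fb F (x - real L * x0') \<le> (1 + 1) * Fb F x) at_top"
    by (rule Fx.long_tail) (use B' in auto)
  have ev2: "eventually (\<lambda>x. real L * x0' \<le> x) at_top" by (rule eventually_ge_at_top)
  show ?thesis
    using ev1 ev2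
  proof eventually_elim
    case (elim x)
    define gc where "gc l = Phi F 1 (k * Suc l) (x - real (Suc l) * x0)" for l
    define gf where "gf l = Phi F B' (1 * Suc l) (x - real (Suc l) * x0')" for l
    define g where "g l = min (gc l) (gf l)" for l
    define th where "th l = (1 - \<eta>) ^ ((l - 1) div N)" for l :: nat
    have th: "0 \<le> th l" "th l \<le> 1" for l unfolding th_def using eta by (auto intro: power_le_one)
    have gc0: "0 \<le> gc l" for l unfolding gc_def by (rule Fx.Phi_nonneg) auto
    have gf0: "0 \<le> gf l" for l unfolding gf_def by (rule Fx.Phi_nonneg) (use B' in auto)
    have g0: "0 \<le> g l" for l unfolding g_def using gc0 gf0 by simp
    have gb: "th l * g l \<le> A * r ^ l * Fb F x" for l
    proof -
      have "th l * g l \<le> th l * gc l" unfolding g_def using th by (intro mult_left_mono) auto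
      also have "\<dots> \<le> A * r ^ l * Fb F x" unfolding th_def gc_def by (rule Ar(4))
      finally show ?thesis .
    qed
    have h1: "measure M (G (a + Suc l) (C1 a (Suc l)) \<inter> {\<omega>\<in>space M. x < (\<Sum>i\<in>{Suc a..a + Suc l}. X i \<omega>)})
               \<le> measure M (G (a + Suc l) (C1 a (Suc l))) * g l" for a l
    proof -
      have "measure M (G (a + Suc l) (C1 a (Suc l)) \<inter> {\<omega>\<in>space M. x < (\<Sum>i\<in>{Suc a..a + Suc l}. X i \<omega>)})
               \<le> measure M (G (a + Suc l) (C1 a (Suc l))) * gc l"
        unfolding gc_def by (rule hyp1[OF dk]) simp_all
      moreover have "measure M (G (a + Suc l) (C1 a (Suc l)) \<inter> {\<omega>\<in>space M. x < (\<Sum>i\<in>{Suc a..a + Suc l}. X i \<omega>)})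
               \<le> measure M (G (a + Suc l) (C1 a (Suc l))) * gf l"
        unfolding gf_def by (rule hyp1[OF B'(5)]) (use B' in auto)
      ultimately show ?thesis unfolding g_def by (simp add: min_mult_distrib_left)
    qed
    have h0: "measure M (G a (C0 a) \<inter> {\<omega>\<in>space M. x < (\<Sum>i\<in>{0..a}. X i \<omega>)})
               \<le> measure M (G a (C0 a)) * g a" for a
    proof -
      have "measure M (G a (C0 a) \<inter> {\<omega>\<in>space M. x < (\<Sum>i\<in>{0..a}. X i \<omega>)}) \<le> measure M (G a (C0 a)) * gc a"
        unfolding gc_def by (rule hyp0[OF dk]) simp_all
      moreover have "measure M (G a (C0 a) \<inter> {\<omega>\<in>space M. x < (\<Sum>i\<in>{0..a}. X i \<omega>)}) \<le> measure M (G a (C0 a)) * gf a"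
        unfolding gf_def by (rule hyp0[OF B'(5)]) (use B' in auto)
      ultimately show ?thesis unfolding g_def by (simp add: min_mult_distrib_left)
    qed
    note tb = total_bound[OF g0 Ar(1) Ar(2) Ar(3) gb[unfolded th_def] h1 h0]
    have sm: "summable (\<lambda>l. th l * g l)" using tb(3) unfolding th_def .
    have split: "(\<Sum>l. th l * g l) = (\<Sum>l. th (l + L) * g (l + L)) + (\<Sum>l<L. th l * g l)"
      by (rule suminf_split_initial_segment[OF sm])
    have part1: "(\<Sum>l. th (l + L) * g (l + L)) \<le> \<epsilon> / 2 * Fb F x"
    proof -
      have f0: "0 \<le> th (l + L) * g (l + L)" for l using th g0 by simp
      have fb: "th (l + L) * g (l + L) \<le> (A * r ^ L * Fb F x) * r ^ l" for l
        using gb[of "l + L"] by (simp add: power_add mult_ac)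
      have "(\<Sum>l. th (l + L) * g (l + L)) \<le> (A * r ^ L * Fb F x) / (1 - r)"
        by (rule geom_series_bound(2)[OF f0 fb Ar(2) Ar(3)])
      also have "\<dots> = (A * r ^ L / (1 - r)) * Fb F x" by simp
      also have "\<dots> \<le> \<epsilon> / 2 * Fb F x" using L Fx.Fb_nonneg[of x] by (intro mult_right_mono) auto
      finally show ?thesis .
    qed
    have part2: "(\<Sum>l<L. th l * g l) \<le> \<epsilon> / 2 * Fb F x"
    proof -
      have tm: "th l * g l \<le> KB * B' * L * 2 ^ L * (2 * Fb F x)" if l: "l < L" for l
      proof -
        have y0: "0 \<le> x - real (Suc l) * x0'"
        proof -
          have "real (Suc l) * x0' \<le> real L * x0'" using l B'(1) by (intro mult_right_mono) auto
          then show ?thesis using elim(2) by simp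
        qed
        have "th l * g l \<le> 1 * gf l" unfolding g_def using th gf0 gc0 by (intro mult_mono) auto
        also have "\<dots> \<le> KB * B' * real (Suc l) * (1 + 1) ^ (Suc l) * Fb F (x - real (Suc l) * x0')"
          unfolding gf_def KB_def using Fx.Kesten[of B' 1 x1 "x - real (Suc l) * x0'" "1 * Suc l"] B' x1 y0
          by simp
        also have "\<dots> \<le> KB * B' * L * 2 ^ L * Fb F (x - real L * x0')"
        proof -
          have p: "(2::real) ^ Suc l \<le> 2 ^ L" by (rule power_increasing) (use l in auto)
          have "real (Suc l) \<le> real L" using l by simp
          then have a1: "KB * B' * real (Suc l) * (1 + 1) ^ Suc l \<le> KB * B' * real L * 2 ^ L"
            using p KB B' by (intro mult_mono) auto
          have a2: "Fb F (x - real (Suc l) * x0') \<le> Fb F (x - real L * x0')"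
            using l B'(1) by (intro Fx.Fb_antimono) (auto intro!: mult_right_mono)
          show ?thesis by (rule mult_mono[OF a1 a2]) (use KB B' Fx.Fb_nonneg in auto)
        qed
        also have "\<dots> \<le> KB * B' * L * 2 ^ L * (2 * Fb F x)"
          using elim(1) KB B' by (intro mult_left_mono) auto
        finally show ?thesis .
      qed
      have "(\<Sum>l<L. th l * g l) \<le> (\<Sum>l<L. KB * B' * L * 2 ^ L * (2 * Fb F x))"
        by (intro sum_mono tm) auto
      also have "\<dots> = 2 * KB * B' * (real L) ^ 2 * 2 ^ L * Fb F x" by (simp add: power2_eq_square)
      also have "\<dots> \<le> 2 * KB * \<delta> * (real L + 1) ^ 2 * 2 ^ L * Fb F x"
        using KB B' Fx.Fb_nonneg[of x]
        by (intro mult_right_mono mult_mono mult_left_mono power_mono) auto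
      also have "\<dots> = \<epsilon> / 2 * Fb F x" unfolding \<delta>_def using KB by (simp add: field_simps)
      finally show ?thesis .
    qed
    have total: "(\<Sum>l. th l * g l) \<le> \<epsilon> * Fb F x" using split part1 part2 by simp
    show ?case using tb(1,2) total unfolding th_def by auto
  qed
qed

end

theorem lemma3p1:
  fixes M :: "'a measure" and d :: nat
    and \<beta> :: "nat \<Rightarrow> real measure" and H :: "nat \<Rightarrow> nat \<Rightarrow> real measure"
    and X :: "nat \<Rightarrow> 'a \<Rightarrow> real" and J :: "nat \<Rightarrow> 'a \<Rightarrow> nat"
    and c :: real and F :: "real measure"
    and \<beta>t :: "nat \<Rightarrow> real" and Ht :: "nat \<Rightarrow> nat \<Rightarrow> real"
  assumes "d \<ge> 1"
    and map: "MAP M d \<beta> H X J"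
    and stoch: "stochastic_mat d (\<lambda>i j. measure (H i j) UNIV)"
    and irr: "irreducible_mat d (\<lambda>i j. measure (H i j) UNIV)"
    and mean_int: "\<forall>i<d. \<forall>j<d. integrable (H i j) (\<lambda>x. x)"
    and drift: "\<forall>w. stationary_vec d (\<lambda>i j. measure (H i j) UNIV) w \<longrightarrow>
                 0 < (\<Sum>i<d. w i * (\<Sum>j<d. integral\<^sup>L (H i j) (\<lambda>x. x)))"
    and c_nonneg: "0 \<le> c"
    and Y: "subexponential F"
    and bt: "\<forall>i<d. 0 \<le> \<beta>t i"
    and Htn: "\<forall>i<d. \<forall>j<d. 0 \<le> Ht i j"
    and tail_beta: "\<forall>i<d. Limsup at_top (\<lambda>x::real. ereal (measure (\<beta> i) {x<..} / measure F {x<..}))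
                        \<le> ereal (c * \<beta>t i)"
    and tail_H: "\<forall>i<d. \<forall>j<d. Limsup at_top (\<lambda>x::real. ereal (measure (H i j) {x<..} / measure F {x<..}))
                        \<le> ereal (c * Ht i j)"
  shows "\<exists>C::real. 0 < C \<and> (\<forall>m\<in>{0::nat, 1}.
           Limsup at_top (\<lambda>x::real. ereal (measure M {\<omega>\<in>space M. DeltaB X J m \<omega> > x} / measure F {x<..}))
             \<le> ereal (c * C))"
proof -
  have d1: "1 \<le> d" by fact
  interpret mapl M d \<beta> H X J by unfold_locales (rule map)
  interpret S: stoch d "\<lambda>i j. measure (H i j) UNIV" by unfold_locales (use d1 stoch irr in auto)
  obtain N \<eta>0 where N: "1 \<le> N" "0 < \<eta>0" "\<eta>0 \<le> 1"
    "\<And>i. i < d \<Longrightarrow> i \<noteq> 0 \<Longrightarrow> (\<Sum>j<d. vg d (\<lambda>i j. measure (H i j) UNIV) (\<lambda>k. if k = i then 1 else 0) Ctab N j) \<le> 1 - \<eta>0"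
    by (rule S.contraction_exists) (rule that, assumption+)
  define \<eta> where "\<eta> = min \<eta>0 (1/2)"
  have Yd: "prob_space F" "sets F = sets borel" "measure F {..<0} = 0" "\<And>x. 0 \<le> x \<Longrightarrow> 0 < measure F {x<..}"
    "(\<lambda>x. measure (F \<star> F) {x<..}) \<sim>[at_top] (\<lambda>x. 2 * measure F {x<..})"
    using Y unfolding subexponential_def by auto
  have stN: "stochN d (\<lambda>i j. measure (H i j) UNIV) N \<eta>"
  proof (intro stochN.intro stochN_axioms.intro S.stoch_axioms)
    show "1 \<le> N" by (rule N(1))
    show "0 < \<eta>" "\<eta> \<le> 1" unfolding \<eta>_def using N by auto
    show "(\<Sum>j<d. vg d (\<lambda>i j. measure (H i j) UNIV) (\<lambda>k. if k = i then 1 else 0) Ctab N j) \<le> 1 - \<eta>"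
      if "i < d" "i \<noteq> 0" for i using N(4)[OF that] unfolding \<eta>_def by auto
  qed
  have sx: "subexp F"
  proof (intro subexp.intro nnd.intro nnd_axioms.intro subexp_axioms.intro real_distribution.intro
      real_distribution_axioms.intro)
    show "prob_space F" by (rule Yd(1))
    show "sets F = sets borel" by (rule Yd(2))
    show "measure F {..<0} = 0" by (rule Yd(3))
    show "0 < measure F {x<..}" if "0 \<le> x" for x by (rule Yd(4)[OF that])
    show "(\<lambda>x. measure (F \<star> F) {x<..}) \<sim>[at_top] (\<lambda>x. 2 * measure F {x<..})" by (rule Yd(5))
  qed
  have mapl_ax: "mapl M d \<beta> H X J" by unfold_locales (rule map)
  have finax: "fin M d \<beta> H X J N \<eta> F"
    by (intro fin.intro mapst.intro fin_axioms.intro mapl_ax stN sx) (simp add: \<eta>_def)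
  interpret fin M d \<beta> H X J N \<eta> F by (rule finax)
  define ms where "ms = (\<lambda>i. measure (\<beta> i) UNIV) ` {..<d} \<union> (\<lambda>(i, j). measure (H i j) UNIV) ` ({..<d} \<times> {..<d})"
  define mmin where "mmin = Min (insert 1 {m\<in>ms. 0 < m})"
  have fms: "finite ms" unfolding ms_def by auto
  have mmin: "0 < mmin" unfolding mmin_def using fms by (subst Min_gr_iff) auto
  have mB: "measure (\<beta> i) UNIV = 0 \<or> mmin \<le> measure (\<beta> i) UNIV" if "i < d" for i
  proof (cases "measure (\<beta> i) UNIV = 0")
    case False
    then have "0 < measure (\<beta> i) UNIV" using measure_nonneg[of "\<beta> i" UNIV] by linarith
    then have "measure (\<beta> i) UNIV \<in> insert 1 {m\<in>ms. 0 < m}" unfolding ms_def using that by auto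
    then show ?thesis unfolding mmin_def using fms by (intro disjI2 Min_le) auto
  qed simp
  have mH: "measure (H i j) UNIV = 0 \<or> mmin \<le> measure (H i j) UNIV" if "i < d" "j < d" for i j
  proof (cases "measure (H i j) UNIV = 0")
    case False
    then have "0 < measure (H i j) UNIV" using measure_nonneg[of "H i j" UNIV] by linarith
    then have "measure (H i j) UNIV \<in> insert 1 {m\<in>ms. 0 < m}" unfolding ms_def using that by force
    then show ?thesis unfolding mmin_def using fms by (intro disjI2 Min_le) auto
  qed simp
  define hs where "hs = \<beta>t ` {..<d} \<union> (\<lambda>(i, j). Ht i j) ` ({..<d} \<times> {..<d})"
  define Hm where "Hm = Max (insert 0 hs)"
  have fhs: "finite hs" unfolding hs_def by auto
  have Hm0: "0 \<le> Hm" unfolding Hm_def using fhs by (intro Max_ge) auto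
  have HmB: "\<beta>t i \<le> Hm" if "i < d" for i unfolding Hm_def hs_def using fhs that by (intro Max_ge) (auto simp: hs_def)
  have HmH: "Ht i j \<le> Hm" if "i < d" "j < d" for i j
  proof -
    have "Ht i j \<in> hs" unfolding hs_def using that by (intro UnI2 image_eqI[of _ _ "(i, j)"]) auto
    then show ?thesis unfolding Hm_def using fhs by (intro Max_ge) auto
  qed
  have evt: "eventually (\<lambda>t. measure \<nu> {t<..} \<le> (c * L + \<delta>) * Fb F t) at_top"
    if lim: "Limsup at_top (\<lambda>x::real. ereal (measure \<nu> {x<..} / measure F {x<..})) \<le> ereal (c * L0)"
      and L: "L0 \<le> L" and \<delta>: "0 < \<delta>" for \<nu> L0 L \<delta>
  proof -
    have "Limsup at_top (\<lambda>x::real. ereal (measure \<nu> {x<..} / measure F {x<..})) < ereal (c * L0 + \<delta>)"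
    proof -
      have "ereal (c * L0) < ereal (c * L0 + \<delta>)" using \<delta> by simp
      then show ?thesis using le_less_trans[OF lim] by blast
    qed
    then have "eventually (\<lambda>x. ereal (measure \<nu> {x<..} / measure F {x<..}) < ereal (c * L0 + \<delta>)) at_top"
      by (rule Limsup_lessD)
    then show ?thesis
    proof (rule eventually_mono)
      fix x assume "ereal (measure \<nu> {x<..} / measure F {x<..}) < ereal (c * L0 + \<delta>)"
      then have "measure \<nu> {x<..} / Fb F x < c * L0 + \<delta>" by (simp add: Fb_def)
      then have "measure \<nu> {x<..} < (c * L0 + \<delta>) * Fb F x" using Fx.Fb_pos[of x] by (simp add: divide_less_eq)
      also have "\<dots> \<le> (c * L + \<delta>) * Fb F x"
        using L c_nonneg Fx.Fb_nonneg[of x] by (intro mult_right_mono add_right_mono mult_left_mono) auto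
      finally show "measure \<nu> {x<..} \<le> (c * L + \<delta>) * Fb F x" by simp
    qed
  qed
  have tails: "\<exists>x1. \<forall>t\<ge>x1. (\<forall>i<d. measure (\<beta> i) {t<..} \<le> (c * Hm + \<delta>) * Fb F t) \<and>
                     (\<forall>i<d. \<forall>j<d. measure (H i j) {t<..} \<le> (c * Hm + \<delta>) * Fb F t)" if \<delta>: "0 < \<delta>" for \<delta>
  proof -
    have e1: "eventually (\<lambda>t. \<forall>i\<in>{..<d}. measure (\<beta> i) {t<..} \<le> (c * Hm + \<delta>) * Fb F t) at_top"
      using tail_beta HmB \<delta> by (intro eventually_ball_finite) (auto intro!: evt)
    have e2: "eventually (\<lambda>t. \<forall>ij\<in>{..<d}\<times>{..<d}. measure (H (fst ij) (snd ij)) {t<..} \<le> (c * Hm + \<delta>) * Fb F t) at_top"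
      using tail_H HmH \<delta> by (intro eventually_ball_finite) (auto intro!: evt)
    from eventually_conj[OF e1 e2] obtain x1 where
      "\<And>t. x1 \<le> t \<Longrightarrow> (\<forall>i\<in>{..<d}. measure (\<beta> i) {t<..} \<le> (c * Hm + \<delta>) * Fb F t) \<and>
         (\<forall>ij\<in>{..<d}\<times>{..<d}. measure (H (fst ij) (snd ij)) {t<..} \<le> (c * Hm + \<delta>) * Fb F t)"
      unfolding eventually_at_top_linorder by blast
    then show ?thesis by (intro exI[of _ x1]) auto
  qed
  have mkdom: "domok B k x0"
    if b: "0 \<le> b" and x1: "\<And>t. x1 \<le> t \<Longrightarrow> (\<forall>i<d. measure (\<beta> i) {t<..} \<le> b * Fb F t) \<and>
                     (\<forall>i<d. \<forall>j<d. measure (H i j) {t<..} \<le> b * Fb F t)"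
      and x0: "x1 \<le> x0" "0 \<le> x0" and B: "0 \<le> B" "B \<le> 1"
      and ph: "\<And>s. 0 \<le> s \<Longrightarrow> (b / mmin) * Fb F (s + x0) \<le> Phi F B k s" for b x1 x0 B k
    unfolding domok_def
  proof (intro conjI allI impI)
    fix i t assume i: "i < d"
    show "measure (\<beta> i) {t<..} \<le> Phi F B k (t - x0) * measure (\<beta> i) UNIV"
      by (rule Fx.dom_gen[OF beta_fin[OF i] beta_sets[OF i] mmin mB[OF i] _ b x0 B ph]) (use x1 i in auto)
  next
    fix i j t assume i: "i < d" and j: "j < d"
    show "measure (H i j) {t<..} \<le> Phi F B k (t - x0) * measure (H i j) UNIV"
      by (rule Fx.dom_gen[OF H_fin[OF i j] H_sets[OF i j] mmin mH[OF i j] _ b x0 B ph]) (use x1 i j in auto)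
  qed
  obtain x1c where x1c: "\<And>t. x1c \<le> t \<Longrightarrow> (\<forall>i<d. measure (\<beta> i) {t<..} \<le> (c * Hm + 1) * Fb F t) \<and>
                     (\<forall>i<d. \<forall>j<d. measure (H i j) {t<..} \<le> (c * Hm + 1) * Fb F t)"
    using tails[of 1] by auto
  have bc: "0 \<le> c * Hm + 1" using c_nonneg Hm0 by simp
  obtain k s0 where ks: "1 \<le> k" "0 \<le> s0" "\<And>x0 s. s0 \<le> x0 \<Longrightarrow> 0 \<le> s \<Longrightarrow> ((c * Hm + 1) / mmin) * Fb F (s + x0) \<le> Phi F 1 k s"
    using Fx.ph_crude[of "(c * Hm + 1) / mmin"] bc mmin by auto
  define x0 where "x0 = max x1c s0"
  have x0: "x1c \<le> x0" "0 \<le> x0" "s0 \<le> x0" unfolding x0_def using ks by auto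
  have dk: "domok 1 k x0"
    by (rule mkdom[OF bc x1c x0(1,2)]) (use ks x0 in auto)
  obtain Cst where Cst: "0 \<le> Cst" "\<And>x m. m \<in> {0, 1} \<Longrightarrow> measure M {\<omega>\<in>space M. x < DeltaB X J m \<omega>} \<le> Cst * Fb F x"
    using crude_Cst[OF dk x0(2)] by blast
  have ratio: "ereal (measure M {\<omega>\<in>space M. DeltaB X J m \<omega> > x} / measure F {x<..}) \<le> ereal a"
    if "measure M {\<omega>\<in>space M. x < DeltaB X J m \<omega>} \<le> a * Fb F x" for m x a
    using that Fx.Fb_pos[of x] by (simp add: Fb_def divide_le_eq)
  show ?thesis
  proof (cases "c = 0")
    case False
    then have cp: "0 < c" using c_nonneg by simp
    define C where "C = max Cst 1 / c"
    show ?thesis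
    proof (intro exI[of _ C] conjI ballI)
      show "0 < C" unfolding C_def using cp by simp
      fix m :: nat assume m: "m \<in> {0, 1}"
      have "Limsup at_top (\<lambda>x::real. ereal (measure M {\<omega>\<in>space M. DeltaB X J m \<omega> > x} / measure F {x<..})) \<le> ereal Cst"
        by (intro Limsup_bounded always_eventually allI ratio Cst(2) m)
      also have "ereal Cst \<le> ereal (c * C)" unfolding C_def using cp by simp
      finally show "Limsup at_top (\<lambda>x::real. ereal (measure M {\<omega>\<in>space M. DeltaB X J m \<omega> > x} / measure F {x<..})) \<le> ereal (c * C)" .
    qed
  next
    case True
    have fine: "\<exists>B' x0'. 0 \<le> x0' \<and> 0 \<le> B' \<and> B' \<le> \<delta> \<and> B' \<le> 1 \<and> domok B' 1 x0'" if \<delta>: "0 < \<delta>" for \<delta>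
    proof -
      define \<delta>0 where "\<delta>0 = mmin * min \<delta> 1"
      have \<delta>0: "0 < \<delta>0" unfolding \<delta>0_def using mmin \<delta> by simp
      obtain x1f where x1f: "\<And>t. x1f \<le> t \<Longrightarrow> (\<forall>i<d. measure (\<beta> i) {t<..} \<le> (c * Hm + \<delta>0) * Fb F t) \<and>
                     (\<forall>i<d. \<forall>j<d. measure (H i j) {t<..} \<le> (c * Hm + \<delta>0) * Fb F t)"
        using tails[OF \<delta>0] by auto
      define B' where "B' = min \<delta> 1"
      have B': "0 \<le> B'" "B' \<le> \<delta>" "B' \<le> 1" unfolding B'_def using \<delta> by auto
      have bb: "(c * Hm + \<delta>0) / mmin = B'" unfolding \<delta>0_def B'_def using True mmin by simp
      define x0' where "x0' = max x1f 0"
      have x0': "x1f \<le> x0'" "0 \<le> x0'" unfolding x0'_def by auto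
      have "domok B' 1 x0'"
      proof (rule mkdom[OF _ x1f x0' B'(1) B'(3)])
        show "0 \<le> c * Hm + \<delta>0" using True \<delta>0 by simp
        show "(c * Hm + \<delta>0) / mmin * Fb F (s + x0') \<le> Phi F B' 1 s" if "0 \<le> s" for s
          unfolding bb by (rule Fx.ph_fine[OF B'(1) B'(3) x0'(2) that])
      qed
      then show ?thesis using B' x0' by blast
    qed
    show ?thesis
    proof (intro exI[of _ 1] conjI ballI)
      fix m :: nat assume m: "m \<in> {0, 1}"
      have "Limsup at_top (\<lambda>x::real. ereal (measure M {\<omega>\<in>space M. DeltaB X J m \<omega> > x} / measure F {x<..})) \<le> ereal 0"
      proof (rule ereal_le_epsilon2)
        fix e :: real assume e: "0 < e"
        have "eventually (\<lambda>x. \<forall>m\<in>{0, 1}. measure M {\<omega>\<in>space M. x < DeltaB X J m \<omega>} \<le> e * Fb F x) at_top"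
          by (rule fine_eps[OF dk x0(2) fine e])
        then have "eventually (\<lambda>x. ereal (measure M {\<omega>\<in>space M. DeltaB X J m \<omega> > x} / measure F {x<..}) \<le> ereal e) at_top"
          by (rule eventually_mono) (use m ratio in auto)
        then have "Limsup at_top (\<lambda>x::real. ereal (measure M {\<omega>\<in>space M. DeltaB X J m \<omega> > x} / measure F {x<..})) \<le> ereal e"
          by (rule Limsup_bounded)
        then show "Limsup at_top (\<lambda>x::real. ereal (measure M {\<omega>\<in>space M. DeltaB X J m \<omega> > x} / measure F {x<..})) \<le> ereal 0 + ereal e"
          by simp
      qed
      then show "Limsup at_top (\<lambda>x::real. ereal (measure M {\<omega>\<in>space M. DeltaB X J m \<omega> > x} / measure F {x<..})) \<le> ereal (c * 1)"
        using True by simp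
    qed simp
  qed
qed

end
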